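(* For a weakly coupled POMDP and horizon $T$, the values of the Lagrangian relaxations (relaxing the linking constraints) of MILP (IP) and of the nonlinear program (UB) are equal; denoting this common value by $z_{\mathrm{LR}}$, $$z_{\mathrm{UB}}\le z_{\mathrm{LR}}\le z_{\mathrm R^{\mathrm c}}\le z_{\mathrm R}.$$
   Context: Weakly coupled POMDP: components $m\in[M]$, each a POMDP $(\mathcal X_S^m,\mathcal X_O^m,\mathcal X_A^m,\mathfrak p^m,\mathbf r^m)$ (initial $p^m(s)$, emissions $p^m(o|s)$, transitions $p^m(s'|s,a)$, reward $r^m$), $\mathbf D^m:\mathcal X_A^m\to\mathbb R^q$, $\mathbf b\in\mathbb R^q_{\ge0}$; full action space $\mathcal X_A=\{\mathbf a\in\prod_m\mathcal X_A^m:\sum_m\mathbf D^m(a^m)\le\mathbf b\}$ nonempty. For a POMDP, $\mathcal Q(T,\mathcal X_S,\mathcal X_O,\mathcal X_A,\mathfrak p)$: pairs $(\tau,\delta)$, $\delta^t_{a|o}\ge0$, $\sum_a\delta^t_{a|o}=1$, nonnegative $\tau$ with (i) $\tau^1_s=p(s)$; (ii) $\sum_{o,a}\tau^t_{soa}=\nu^t_s$, $\nu^1_s=\tau^1_s$, $\nu^t_s=\sum_{s'',a''}\tau^{t-1}_{s''a''s}$; (iii) $\sum_{\bar s}\tau^t_{sa\bar s}=\sum_o\tau^t_{soa}$; (iv) $\tau^t_{sas'}=p(s'|s,a)\sum_{\bar s}\tau^t_{sa\bar s}$; (v) $\tau^t_{soa}=\delta^t_{a|o}p(o|s)\sum_{o',a'}\tau^t_{so'a'}$.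 $\mathcal Q^{\mathrm d}$: same but $\delta^t_{a|o}\in\{0,1\}$ and (v) replaced by $\tau^t_{soa}\le p(o|s)\nu^t_s$, $\tau^t_{soa}\le\delta^t_{a|o}$, $\tau^t_{soa}\ge p(o|s)\nu^t_s+\delta^t_{a|o}-1$. (IP): maximize $\sum_t\sum_m\sum_{s,a,s'}r^m(s,a,s')\tau^{t,m}_{sas'}$ s.t. $(\tau^m,\delta^m)\in\mathcal Q^{\mathrm d}(T,\mathcal X_S^m,\mathcal X_O^m,\mathcal X_A^m,\mathfrak p^m)$, $\tau^{t,m}_a=\sum_{s,o}\tau^{t,m}_{soa}$, and linking constraints $\sum_m\sum_a\mathbf D^m(a)\tau^{t,m}_a\le\mathbf b$ ($t\in[T]$). (UB): same with $\mathcal Q$ in place of $\mathcal Q^{\mathrm d}$; value $z_{\mathrm{UB}}$. The Lagrangian relaxation of (IP) (resp. (UB)) is $\min_{\beta\in\mathbb R_+^{T\times q}}$ of the maximum, over the constraints other than the linking constraints, of $\sum_t\sum_m\sum_{s,a,s'}r^m(s,a,s')\tau^{t,m}_{sas'}+\sum_t(\beta^t)^\top(\mathbf b-\sum_m\sum_a\mathbf D^m(a)\tau^{t,m}_a)$. $z_{\mathrm R}$: value of the linear relaxation of (IP) ($\delta^{t,m}_{a|o}\in[0,1]$). $z_{\mathrm R^{\mathrm c}}$: value of that linear relaxation with, for each $m$ and $t\ge2$, additional nonnegative variables $\tau^{t,m}_{s'a'soa}$ and constraints $\sum_{s',a'}\tau^{t,m}_{s'a'soa}=\tau^{t,m}_{soa}$;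 $\sum_a\tau^{t,m}_{s'a'soa}=p^m(o|s)p^m(s|s',a')\sum_{\bar s}\tau^{t-1,m}_{s'a'\bar s}$; $\tau^{t,m}_{s'a'soa}=p^m(s|s',a',o)\sum_{\bar s}\tau^{t,m}_{s'a'\bar soa}$ with $p^m(s|s',a',o)=p^m(o|s)p^m(s|s',a')/\sum_{\bar s}p^m(o|\bar s)p^m(\bar s|s',a')$. *)

theory Defs
  imports Complex_Main
begin

text \<open>Data: p0 s = p(s),
  pe s ob = p(ob|s), pt s a s' = p(s'|s,a).  Decision variables of the occupation
  formulation: tsoa t s ob a = tau^t_{soa}, tsas t s a s' = tau^t_{sas'},
  dl t ob a = delta^t_{a|ob}.  tau^1_s is fixed to p(s) by constraint (i), so it
  is substituted directly.\<close>

definition pomdp :: "'s set \<Rightarrow> 'ob set \<Rightarrow> 'a set \<Rightarrow> ('s \<Rightarrow> real) \<Rightarrow>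
    ('s \<Rightarrow> 'ob \<Rightarrow> real) \<Rightarrow> ('s \<Rightarrow> 'a \<Rightarrow> 's \<Rightarrow> real) \<Rightarrow> bool" where
  "pomdp S Ob A p0 pe pt \<longleftrightarrow>
     finite S \<and> finite Ob \<and> finite A \<and> S \<noteq> {} \<and> Ob \<noteq> {} \<and> A \<noteq> {} \<and>
     (\<forall>s\<in>S. p0 s \<ge> 0) \<and> (\<Sum>s\<in>S. p0 s) = 1 \<and>
     (\<forall>s\<in>S. (\<forall>ob\<in>Ob. pe s ob \<ge> 0) \<and> (\<Sum>ob\<in>Ob. pe s ob) = 1) \<and>
     (\<forall>s\<in>S. \<forall>a\<in>A. (\<forall>s'\<in>S. pt s a s' \<ge> 0) \<and> (\<Sum>s'\<in>S. pt s a s') = 1)"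

definition nu :: "'s set \<Rightarrow> 'a set \<Rightarrow> ('s \<Rightarrow> real) \<Rightarrow>
    (nat \<Rightarrow> 's \<Rightarrow> 'a \<Rightarrow> 's \<Rightarrow> real) \<Rightarrow> nat \<Rightarrow> 's \<Rightarrow> real" where
  "nu S A p0 tsas t s =
     (if t = 1 then p0 s else (\<Sum>s''\<in>S. \<Sum>a''\<in>A. tsas (t - 1) s'' a'' s))"

definition Q_base :: "nat \<Rightarrow> 's set \<Rightarrow> 'ob set \<Rightarrow> 'a set \<Rightarrow> ('s \<Rightarrow> real) \<Rightarrow>
    ('s \<Rightarrow> 'a \<Rightarrow> 's \<Rightarrow> real) \<Rightarrow>
    (nat \<Rightarrow> 's \<Rightarrow> 'ob \<Rightarrow> 'a \<Rightarrow> real) \<Rightarrow> (nat \<Rightarrow> 's \<Rightarrow> 'a \<Rightarrow> 's \<Rightarrow> real) \<Rightarrow>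
    (nat \<Rightarrow> 'ob \<Rightarrow> 'a \<Rightarrow> real) \<Rightarrow> bool" where
  "Q_base T S Ob A p0 pt tsoa tsas dl \<longleftrightarrow>
     (\<forall>t\<in>{1..T}.
        (\<forall>s\<in>S. \<forall>ob\<in>Ob. \<forall>a\<in>A. tsoa t s ob a \<ge> 0) \<and>
        (\<forall>s\<in>S. \<forall>a\<in>A. \<forall>s'\<in>S. tsas t s a s' \<ge> 0) \<and>
        (\<forall>ob\<in>Ob. (\<forall>a\<in>A. dl t ob a \<ge> 0) \<and> (\<Sum>a\<in>A. dl t ob a) = 1) \<and>
        (\<forall>s\<in>S. (\<Sum>ob\<in>Ob. \<Sum>a\<in>A. tsoa t s ob a) = nu S A p0 tsas t s) \<and>
        (\<forall>s\<in>S. \<forall>a\<in>A. (\<Sum>sb\<in>S. tsas t s a sb) = (\<Sum>ob\<in>Ob. tsoa t s ob a)) \<and>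
        (\<forall>s\<in>S. \<forall>a\<in>A. \<forall>s'\<in>S. tsas t s a s' = pt s a s' * (\<Sum>sb\<in>S. tsas t s a sb)))"

definition inQ where
  "inQ T S Ob A p0 pe pt tsoa tsas dl \<longleftrightarrow>
     Q_base T S Ob A p0 pt tsoa tsas dl \<and>
     (\<forall>t\<in>{1..T}. \<forall>s\<in>S. \<forall>ob\<in>Ob. \<forall>a\<in>A.
        tsoa t s ob a = dl t ob a * pe s ob * (\<Sum>ob'\<in>Ob. \<Sum>a'\<in>A. tsoa t s ob' a'))"

text \<open>McCormick constraints replacing (v).\<close>
definition mccormick where
  "mccormick T S Ob A p0 pe tsoa tsas dl \<longleftrightarrow>
     (\<forall>t\<in>{1..T}. \<forall>s\<in>S. \<forall>ob\<in>Ob. \<forall>a\<in>A.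
        tsoa t s ob a \<le> pe s ob * nu S A p0 tsas t s \<and>
        tsoa t s ob a \<le> dl t ob a \<and>
        tsoa t s ob a \<ge> pe s ob * nu S A p0 tsas t s + dl t ob a - 1)"

definition inQd where
  "inQd T S Ob A p0 pe pt tsoa tsas dl \<longleftrightarrow>
     Q_base T S Ob A p0 pt tsoa tsas dl \<and>
     (\<forall>t\<in>{1..T}. \<forall>ob\<in>Ob. \<forall>a\<in>A. dl t ob a = 0 \<or> dl t ob a = 1) \<and>
     mccormick T S Ob A p0 pe tsoa tsas dl"

definition inQd_relax where
  "inQd_relax T S Ob A p0 pe pt tsoa tsas dl \<longleftrightarrow>
     Q_base T S Ob A p0 pt tsoa tsas dl \<and>
     (\<forall>t\<in>{1..T}. \<forall>ob\<in>Ob. \<forall>a\<in>A. 0 \<le> dl t ob a \<and> dl t ob a \<le> 1) \<and>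
     mccormick T S Ob A p0 pe tsoa tsas dl"

text \<open>p(s|s',a',ob); division by zero yields 0 in HOL (then all weights
  p(ob|s)p(s|s',a') vanish as well).\<close>
definition pcond where
  "pcond S pe pt s' a' ob s =
     pe s ob * pt s' a' s / (\<Sum>sb\<in>S. pe sb ob * pt s' a' sb)"

text \<open>Valid inequalities of R^c for one component; x t s' a' s ob a = tau^t_{s'a'soa}.\<close>
definition cuts where
  "cuts T S Ob A pe pt tsoa tsas x \<longleftrightarrow>
     (\<forall>t\<in>{2..T}.
        (\<forall>s'\<in>S. \<forall>a'\<in>A. \<forall>s\<in>S. \<forall>ob\<in>Ob. \<forall>a\<in>A. x t s' a' s ob a \<ge> 0) \<and>
        (\<forall>s\<in>S. \<forall>ob\<in>Ob. \<forall>a\<in>A. (\<Sum>s'\<in>S. \<Sum>a'\<in>A. x t s' a' s ob a) = tsoa t s ob a) \<and>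
        (\<forall>s'\<in>S. \<forall>a'\<in>A. \<forall>s\<in>S. \<forall>ob\<in>Ob.
           (\<Sum>a\<in>A. x t s' a' s ob a) = pe s ob * pt s' a' s * (\<Sum>sb\<in>S. tsas (t - 1) s' a' sb)) \<and>
        (\<forall>s'\<in>S. \<forall>a'\<in>A. \<forall>s\<in>S. \<forall>ob\<in>Ob. \<forall>a\<in>A.
           x t s' a' s ob a = pcond S pe pt s' a' ob s * (\<Sum>sb\<in>S. x t s' a' sb ob a)))"

text \<open>Components indexed by m in {1..M}; all component-indexed data are functions of m.
  Resource vectors in R^q are functions 'k \<Rightarrow> real with 'k a finite index type.\<close>

definition weakly_coupled_pomdp where
  "weakly_coupled_pomdp M S Ob A p0 pe pt (D :: nat \<Rightarrow> 'a \<Rightarrow> 'k::finite \<Rightarrow> real) b \<longleftrightarrow>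
     (\<forall>m\<in>{1..M}. pomdp (S m) (Ob m) (A m) (p0 m) (pe m) (pt m)) \<and>
     (\<forall>k. b k \<ge> 0) \<and>
     (\<exists>act. (\<forall>m\<in>{1..M}. act m \<in> A m) \<and>
            (\<forall>k. (\<Sum>m\<in>{1..M}. D m (act m) k) \<le> b k))"

definition objective where
  "objective T M S A r tsas =
     (\<Sum>t\<in>{1..T}. \<Sum>m\<in>{1..M}. \<Sum>s\<in>S m. \<Sum>a\<in>A m. \<Sum>s'\<in>S m.
        r m s a s' * tsas m t s a s')"

definition tau_a where
  "tau_a S Ob tsoa m t a = (\<Sum>s\<in>S m. \<Sum>ob\<in>Ob m. tsoa m t s ob a)"

definition usage where
  "usage M S Ob A D tsoa t k = (\<Sum>m\<in>{1..M}. \<Sum>a\<in>A m. D m a k * tau_a S Ob tsoa m t a)"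

definition linking where
  "linking T M S Ob A D b tsoa \<longleftrightarrow>
     (\<forall>t\<in>{1..T}. \<forall>k. usage M S Ob A D tsoa t k \<le> b k)"

definition lagr_objective where
  "lagr_objective T M S Ob A r (D :: nat \<Rightarrow> 'a \<Rightarrow> 'k::finite \<Rightarrow> real) b \<beta> tsoa tsas =
     objective T M S A r tsas +
     (\<Sum>t\<in>{1..T}. \<Sum>k\<in>UNIV. \<beta> t k * (b k - usage M S Ob A D tsoa t k))"

definition z_UB where
  "z_UB T M S Ob A p0 pe pt r D b =
     Sup {objective T M S A r tsas | tsoa tsas dl.
          (\<forall>m\<in>{1..M}. inQ T (S m) (Ob m) (A m) (p0 m) (pe m) (pt m) (tsoa m) (tsas m) (dl m)) \<and>
          linking T M S Ob A D b tsoa}"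

definition z_R where
  "z_R T M S Ob A p0 pe pt r D b =
     Sup {objective T M S A r tsas | tsoa tsas dl.
          (\<forall>m\<in>{1..M}. inQd_relax T (S m) (Ob m) (A m) (p0 m) (pe m) (pt m) (tsoa m) (tsas m) (dl m)) \<and>
          linking T M S Ob A D b tsoa}"

definition z_Rc where
  "z_Rc T M S Ob A p0 pe pt r D b =
     Sup {objective T M S A r tsas | tsoa tsas dl x.
          (\<forall>m\<in>{1..M}. inQd_relax T (S m) (Ob m) (A m) (p0 m) (pe m) (pt m) (tsoa m) (tsas m) (dl m) \<and>
              cuts T (S m) (Ob m) (A m) (pe m) (pt m) (tsoa m) (tsas m) (x m)) \<and>
          linking T M S Ob A D b tsoa}"

definition z_LR_IP where
  "z_LR_IP T M S Ob A p0 pe pt r D b =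
     Inf ((\<lambda>\<beta>. Sup {lagr_objective T M S Ob A r D b \<beta> tsoa tsas | tsoa tsas dl.
          (\<forall>m\<in>{1..M}. inQd T (S m) (Ob m) (A m) (p0 m) (pe m) (pt m) (tsoa m) (tsas m) (dl m))})
        ` {\<beta>. \<forall>t\<in>{1..T}. \<forall>k. \<beta> t k \<ge> 0})"

definition z_LR_UB where
  "z_LR_UB T M S Ob A p0 pe pt r D b =
     Inf ((\<lambda>\<beta>. Sup {lagr_objective T M S Ob A r D b \<beta> tsoa tsas | tsoa tsas dl.
          (\<forall>m\<in>{1..M}. inQ T (S m) (Ob m) (A m) (p0 m) (pe m) (pt m) (tsoa m) (tsas m) (dl m))})
        ` {\<beta>. \<forall>t\<in>{1..T}. \<forall>k. \<beta> t k \<ge> 0})"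

end

theory Submission
  imports Defs "HOL-Library.Nat_Bijection" "HOL-Library.FuncSet"
begin


definition codeP :: "nat \<Rightarrow> nat \<Rightarrow> nat" where "codeP p q = 2 * prod_encode (p,q) + 1"

lemma codeP_inj: "codeP p q = codeP p' q' \<longleftrightarrow> p = p' \<and> q = q'"
  by (auto simp: codeP_def)
lemma codeP_ne: "codeP p q \<noteq> 2 * i"
  unfolding codeP_def by presburger

lemma backmap:
  fixes I :: "nat set" and a H :: "nat \<Rightarrow> real" and y' :: "nat \<Rightarrow> real"
  assumes fin: "finite I"
  defines "I0 \<equiv> {i\<in>I. a i = 0}" and "Ip \<equiv> {i\<in>I. a i > 0}" and "Ng \<equiv> {i\<in>I. a i < 0}"
  defines "y \<equiv> \<lambda>i. (if i \<in> I0 then y' (2*i) else 0)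
      + (if i \<in> Ip then (\<Sum>q\<in>Ng. y' (codeP i q) * (- a q)) else 0)
      + (if i \<in> Ng then (\<Sum>p\<in>Ip. y' (codeP p i) * a p) else 0)"
  shows "(\<Sum>i\<in>I. y i * H i) = (\<Sum>i\<in>I0. y' (2*i) * H i)
       + (\<Sum>pq\<in>Ip\<times>Ng. y' (codeP (fst pq) (snd pq)) * ((- a (snd pq)) * H (fst pq) + a (fst pq) * H (snd pq)))"
proof -
  have I: "I = I0 \<union> Ip \<union> Ng" and d1: "I0 \<inter> Ip = {}" "(I0 \<union> Ip) \<inter> Ng = {}"
    unfolding I0_def Ip_def Ng_def by auto
  have fI0: "finite I0" and fIp: "finite Ip" and fIm: "finite Ng" using fin unfolding I0_def Ip_def Ng_def by auto
  have "(\<Sum>i\<in>I. y i * H i) = (\<Sum>i\<in>I0. y i * H i) + (\<Sum>i\<in>Ip. y i * H i) + (\<Sum>i\<in>Ng. y i * H i)"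
    by (subst I, subst sum.union_disjoint, use fI0 fIp fIm d1 in auto) (subst sum.union_disjoint, use fI0 fIp fIm d1 in auto)
  also have "(\<Sum>i\<in>I0. y i * H i) = (\<Sum>i\<in>I0. y' (2*i) * H i)"
    by (rule sum.cong) (auto simp: y_def I0_def Ip_def Ng_def)
  also have "(\<Sum>i\<in>Ip. y i * H i) = (\<Sum>p\<in>Ip. \<Sum>q\<in>Ng. y' (codeP p q) * (- a q) * H p)"
    by (rule sum.cong) (auto simp: y_def I0_def Ip_def Ng_def sum_distrib_right)
  also have "(\<Sum>i\<in>Ng. y i * H i) = (\<Sum>q\<in>Ng. \<Sum>p\<in>Ip. y' (codeP p q) * a p * H q)"
    by (rule sum.cong) (auto simp: y_def I0_def Ip_def Ng_def sum_distrib_right)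
  also have "\<dots> = (\<Sum>p\<in>Ip. \<Sum>q\<in>Ng. y' (codeP p q) * a p * H q)"
    by (rule sum.swap)
  finally have e: "(\<Sum>i\<in>I. y i * H i) = (\<Sum>i\<in>I0. y' (2*i) * H i) + (\<Sum>p\<in>Ip. \<Sum>q\<in>Ng. y' (codeP p q) * ((- a q) * H p + a p * H q))"
    by (simp add: sum.distrib[symmetric] algebra_simps)
  show ?thesis unfolding e by (simp add: sum.cartesian_product split_def)
qed

definition lift :: "(nat \<Rightarrow> real) \<Rightarrow> (nat \<Rightarrow> real) \<Rightarrow> nat \<Rightarrow> real" where
  "lift a H i' = (if even i' then H (i' div 2) else
     (let pq = prod_decode (i' div 2) in (- a (snd pq)) * H (fst pq) + a (fst pq) * H (snd pq)))"

lemma lift_even[simp]: "lift a H (2*i) = H i" by (simp add: lift_def)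
lemma lift_code[simp]: "lift a H (codeP p q) = (- a q) * H p + a p * H q"
  by (simp add: lift_def codeP_def)

lemma backmap2:
  fixes I :: "nat set" and a H :: "nat \<Rightarrow> real" and y' :: "nat \<Rightarrow> real"
  assumes fin: "finite I"
  defines "I0 \<equiv> {i\<in>I. a i = 0}" and "Ip \<equiv> {i\<in>I. a i > 0}" and "Ng \<equiv> {i\<in>I. a i < 0}"
  defines "y \<equiv> \<lambda>i. (if i \<in> I0 then y' (2*i) else 0)
      + (if i \<in> Ip then (\<Sum>q\<in>Ng. y' (codeP i q) * (- a q)) else 0)
      + (if i \<in> Ng then (\<Sum>p\<in>Ip. y' (codeP p i) * a p) else 0)"
  defines "I' \<equiv> (\<lambda>i. 2*i) ` I0 \<union> (\<lambda>pq. codeP (fst pq) (snd pq)) ` (Ip \<times> Ng)"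
  shows "(\<Sum>i\<in>I. y i * H i) = (\<Sum>i'\<in>I'. y' i' * lift a H i')"
proof -
  have fI0: "finite I0" and fIp: "finite Ip" and fNg: "finite Ng" using fin unfolding I0_def Ip_def Ng_def by auto
  have "(\<Sum>i'\<in>I'. y' i' * lift a H i') = (\<Sum>i'\<in>(\<lambda>i. 2*i) ` I0. y' i' * lift a H i')
     + (\<Sum>i'\<in>(\<lambda>pq. codeP (fst pq) (snd pq)) ` (Ip \<times> Ng). y' i' * lift a H i')"
    unfolding I'_def by (rule sum.union_disjoint) (use fI0 fIp fNg codeP_ne in \<open>auto simp: eq_commute\<close>)
  also have "(\<Sum>i'\<in>(\<lambda>i. 2*i) ` I0. y' i' * lift a H i') = (\<Sum>i\<in>I0. y' (2*i) * H i)"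
    by (subst sum.reindex) (auto simp: inj_on_def)
  also have "(\<Sum>i'\<in>(\<lambda>pq. codeP (fst pq) (snd pq)) ` (Ip \<times> Ng). y' i' * lift a H i')
     = (\<Sum>pq\<in>Ip\<times>Ng. y' (codeP (fst pq) (snd pq)) * ((- a (snd pq)) * H (fst pq) + a (fst pq) * H (snd pq)))"
    by (subst sum.reindex) (auto simp: inj_on_def codeP_inj prod_eq_iff)
  finally show ?thesis using backmap[OF fin, of a y' H] unfolding y_def I0_def Ip_def Ng_def by simp
qed

lemma fm_extend:
  fixes I :: "nat set" and A :: "nat \<Rightarrow> 'j \<Rightarrow> real" and B :: "nat \<Rightarrow> real"
  assumes fin: "finite I" and j0: "j0 \<notin> J" and fJ: "finite J"
  defines "a \<equiv> \<lambda>i. A i j0"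
  defines "I0 \<equiv> {i\<in>I. a i = 0}" and "Ip \<equiv> {i\<in>I. a i > 0}" and "Ng \<equiv> {i\<in>I. a i < 0}"
  defines "I' \<equiv> (\<lambda>i. 2*i) ` I0 \<union> (\<lambda>pq. codeP (fst pq) (snd pq)) ` (Ip \<times> Ng)"
  assumes feas: "\<forall>i'\<in>I'. (\<Sum>j\<in>J. lift a (\<lambda>i. A i j) i' * x j) \<le> lift a B i'"
  shows "\<exists>x'. \<forall>i\<in>I. (\<Sum>j\<in>insert j0 J. A i j * x' j) \<le> B i"
proof -
  define s where "s i = (\<Sum>j\<in>J. A i j * x j)" for i
  have fIp: "finite Ip" and fNg: "finite Ng" using fin unfolding Ip_def Ng_def by auto
  have liftsum: "(\<Sum>j\<in>J. lift a (\<lambda>i. A i j) (codeP p q) * x j) = (- a q) * s p + a p * s q" for p q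
    by (simp add: s_def sum.distrib sum_distrib_left algebra_simps sum_subtractf sum_negf)
  have z0: "s i \<le> B i" if "i \<in> I0" for i
  proof -
    have "2*i \<in> I'" using that unfolding I'_def by auto
    with feas show ?thesis by (auto simp: s_def)
  qed
  define U where "U p = (B p - s p) / a p" for p
  define L where "L q = (B q - s q) / a q" for q
  have LU: "L q \<le> U p" if "p \<in> Ip" "q \<in> Ng" for p q
  proof -
    have "codeP p q \<in> I'" using that unfolding I'_def by force
    with feas have h: "(- a q) * s p + a p * s q \<le> (- a q) * B p + a p * B q"
      using liftsum[of p q] by force
    have ap: "a p > 0" and aq: "a q < 0" using that unfolding Ip_def Ng_def by auto
    have "a p * (s q - B q) \<le> (- a q) * (B p - s p)" using h by (simp add: algebra_simps)
    hence "(s q - B q) / (- a q) \<le> (B p - s p) / a p"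
      using ap aq by (simp add: field_simps)
    thus ?thesis unfolding L_def U_def using aq by (simp add: field_simps)
  qed
  define z where "z = (if Ng \<noteq> {} then Max (L ` Ng) else if Ip \<noteq> {} then Min (U ` Ip) else 0)"
  have zU: "z \<le> U p" if "p \<in> Ip" for p
  proof (cases "Ng = {}")
    case True thus ?thesis using that fIp by (auto simp: z_def)
  next
    case False
    hence "Max (L ` Ng) \<le> U p" using fNg LU[OF that] by (subst Max_le_iff) auto
    thus ?thesis using False by (simp add: z_def)
  qed
  have zL: "L q \<le> z" if "q \<in> Ng" for q
    using that fNg by (auto simp: z_def)
  define x' where "x' = x(j0 := z)"
  have sx: "(\<Sum>j\<in>insert j0 J. A i j * x' j) = a i * z + s i" for i
  proof -
    have "(\<Sum>j\<in>J. A i j * x' j) = s i" unfolding s_def x'_def using j0 by (intro sum.cong) auto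
    thus ?thesis using j0 fJ by (simp add: x'_def a_def)
  qed
  show ?thesis
  proof (intro exI ballI)
    fix i assume i: "i \<in> I"
    show "(\<Sum>j\<in>insert j0 J. A i j * x' j) \<le> B i"
    proof (cases "a i = 0")
      case True thus ?thesis using z0[of i] i sx[of i] by (simp add: I0_def)
    next
      case False
      show ?thesis
      proof (cases "a i > 0")
        case True
        hence "z \<le> (B i - s i) / a i" using zU[of i] i by (simp add: Ip_def U_def)
        hence "a i * z \<le> B i - s i" using True by (simp add: field_simps)
        thus ?thesis using sx[of i] by simp
      next
        case f2: False
        hence neg: "a i < 0" using False by simp
        hence "(B i - s i) / a i \<le> z" using zL[of i] i by (simp add: Ng_def L_def)
        hence "a i * z \<le> B i - s i" using neg by (simp add: field_simps)
        thus ?thesis using sx[of i] by simp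
      qed
    qed
  qed
qed

lemma farkas_nat:
  fixes J :: "'j set" and I :: "nat set" and A :: "nat \<Rightarrow> 'j \<Rightarrow> real" and B :: "nat \<Rightarrow> real"
  assumes fJ: "finite J"
  shows "finite I \<Longrightarrow> \<not>(\<exists>x. \<forall>i\<in>I. (\<Sum>j\<in>J. A i j * x j) \<le> B i) \<Longrightarrow>
     \<exists>y. (\<forall>i\<in>I. 0 \<le> y i) \<and> (\<forall>j\<in>J. (\<Sum>i\<in>I. y i * A i j) = 0) \<and> (\<Sum>i\<in>I. y i * B i) < 0"
  using fJ
proof (induction J arbitrary: I A B rule: finite_induct)
  case empty
  then obtain i where i: "i \<in> I" "B i < 0" by (metis not_le sum.empty)
  show ?case
    by (rule exI[of _ "\<lambda>k. if k = i then 1 else 0"]) (use i empty in \<open>auto simp: if_distrib[of "\<lambda>u. u * _"] sum.delta cong: if_cong\<close>)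
next
  case (insert j0 J)
  define a where "a = (\<lambda>i. A i j0)"
  define I0 where "I0 = {i\<in>I. a i = 0}"
  define Ip where "Ip = {i\<in>I. a i > 0}"
  define Ng where "Ng = {i\<in>I. a i < 0}"
  define I' where "I' = (\<lambda>i. 2*i) ` I0 \<union> (\<lambda>pq. codeP (fst pq) (snd pq)) ` (Ip \<times> Ng)"
  have fI': "finite I'" using insert.prems(1) unfolding I'_def I0_def Ip_def Ng_def by auto
  have inf': "\<not>(\<exists>x. \<forall>i'\<in>I'. (\<Sum>j\<in>J. lift a (\<lambda>i. A i j) i' * x j) \<le> lift a B i')"
  proof
    assume "\<exists>x. \<forall>i'\<in>I'. (\<Sum>j\<in>J. lift a (\<lambda>i. A i j) i' * x j) \<le> lift a B i'"
    then obtain x where x: "\<forall>i'\<in>I'. (\<Sum>j\<in>J. lift a (\<lambda>i. A i j) i' * x j) \<le> lift a B i'" by blast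
    have "\<exists>x'. \<forall>i\<in>I. (\<Sum>j\<in>insert j0 J. A i j * x' j) \<le> B i"
      by (rule fm_extend[OF insert.prems(1) insert.hyps(2) insert.hyps(1)]) (use x in \<open>simp add: I'_def I0_def Ip_def Ng_def a_def\<close>)
    thus False using insert.prems(2) by blast
  qed
  from insert.IH[OF fI' inf'] obtain y' where
    y': "\<forall>i\<in>I'. 0 \<le> y' i" "\<forall>j\<in>J. (\<Sum>i\<in>I'. y' i * lift a (\<lambda>i. A i j) i) = 0"
        "(\<Sum>i\<in>I'. y' i * lift a B i) < 0" by blast
  define y where "y \<equiv> \<lambda>i. (if i \<in> I0 then y' (2*i) else 0)
      + (if i \<in> Ip then (\<Sum>q\<in>Ng. y' (codeP i q) * (- a q)) else 0)
      + (if i \<in> Ng then (\<Sum>p\<in>Ip. y' (codeP p i) * a p) else 0)"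
  have bm: "(\<Sum>i\<in>I. y i * H i) = (\<Sum>i'\<in>I'. y' i' * lift a H i')" for H
    using backmap2[OF insert.prems(1), of a y' H] unfolding y_def I0_def Ip_def Ng_def I'_def by simp
  have bm1: "(\<Sum>i\<in>I. y i * H i) = (\<Sum>i\<in>I0. y' (2*i) * H i)
       + (\<Sum>pq\<in>Ip\<times>Ng. y' (codeP (fst pq) (snd pq)) * ((- a (snd pq)) * H (fst pq) + a (fst pq) * H (snd pq)))" for H
    using backmap[OF insert.prems(1), of a y' H] unfolding y_def I0_def Ip_def Ng_def by simp
  have nn: "0 \<le> y i" if "i \<in> I" for i
  proof -
    have a1: "0 \<le> (if i \<in> I0 then y' (2*i) else 0)" using y' unfolding I'_def by auto
    have a2: "0 \<le> (if i \<in> Ip then (\<Sum>q\<in>Ng. y' (codeP i q) * (- a q)) else 0)"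
    proof -
      have "0 \<le> y' (codeP i q) * (- a q)" if "i \<in> Ip" "q \<in> Ng" for q
      proof -
        have "codeP i q \<in> I'" using that unfolding I'_def by force
        hence "0 \<le> y' (codeP i q)" using y'(1) by blast
        moreover have "0 \<le> - a q" using that by (simp add: Ng_def)
        ultimately show ?thesis by (rule mult_nonneg_nonneg)
      qed
      thus ?thesis by (auto intro!: sum_nonneg)
    qed
    have a3: "0 \<le> (if i \<in> Ng then (\<Sum>p\<in>Ip. y' (codeP p i) * a p) else 0)"
    proof -
      have "0 \<le> y' (codeP p i) * a p" if "i \<in> Ng" "p \<in> Ip" for p
      proof -
        have "codeP p i \<in> I'" using that unfolding I'_def by force
        hence "0 \<le> y' (codeP p i)" using y'(1) by blast
        moreover have "0 \<le> a p" using that by (simp add: Ip_def)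
        ultimately show ?thesis by (rule mult_nonneg_nonneg)
      qed
      thus ?thesis by (auto intro!: sum_nonneg)
    qed
    show ?thesis using a1 a2 a3 unfolding y_def by linarith
  qed
  show ?case
  proof (intro exI conjI ballI)
    show "0 \<le> y i" if "i \<in> I" for i using nn that .
    show "(\<Sum>i\<in>I. y i * B i) < 0" using bm[of B] y'(3) by simp
    fix j assume j: "j \<in> insert j0 J"
    show "(\<Sum>i\<in>I. y i * A i j) = 0"
    proof (cases "j = j0")
      case True
      have "(\<Sum>i\<in>I0. y' (2*i) * A i j) = 0" using True by (auto simp: I0_def a_def)
      thus ?thesis using bm1[of "\<lambda>i. A i j"] True by (simp add: a_def algebra_simps)
    next
      case False thus ?thesis using j bm[of "\<lambda>i. A i j"] y'(2) by auto
    qed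
  qed
qed

lemma farkas:
  fixes I :: "'i set" and J :: "'j set" and A :: "'i \<Rightarrow> 'j \<Rightarrow> real" and B :: "'i \<Rightarrow> real"
  assumes fI: "finite I" and fJ: "finite J"
    and inf: "\<not>(\<exists>x. \<forall>i\<in>I. (\<Sum>j\<in>J. A i j * x j) \<le> B i)"
  shows "\<exists>y. (\<forall>i\<in>I. 0 \<le> y i) \<and> (\<forall>j\<in>J. (\<Sum>i\<in>I. y i * A i j) = 0) \<and> (\<Sum>i\<in>I. y i * B i) < 0"
proof -
  obtain f :: "'i \<Rightarrow> nat" and n where f: "f ` I = {i. i < n}" "inj_on f I"
    using finite_imp_inj_to_nat_seg[OF fI] by blast
  define g where "g = inv_into I f"
  have gf: "g (f i) = i" if "i \<in> I" for i using f(2) that by (simp add: g_def)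
  have ri: "(\<Sum>k\<in>f ` I. h k) = (\<Sum>i\<in>I. h (f i))" for h :: "nat \<Rightarrow> real"
    using f(2) by (simp add: sum.reindex)
  have inf': "\<not>(\<exists>x. \<forall>k\<in>f ` I. (\<Sum>j\<in>J. A (g k) j * x j) \<le> B (g k))"
    using inf gf by auto
  obtain y' where y': "\<forall>k\<in>f ` I. 0 \<le> y' k" "\<forall>j\<in>J. (\<Sum>k\<in>f ` I. y' k * A (g k) j) = 0"
      "(\<Sum>k\<in>f ` I. y' k * B (g k)) < 0"
    using farkas_nat[OF fJ _ inf'] fI by blast
  show ?thesis
    by (rule exI[of _ "\<lambda>i. y' (f i)"]) (use y' gf in \<open>auto simp: ri\<close>)
qed



definition upd :: "(nat \<Rightarrow> 'ob \<Rightarrow> 'a \<Rightarrow> real) \<Rightarrow> nat \<Rightarrow> 'ob \<Rightarrow> 'a \<Rightarrow> (nat \<Rightarrow> 'ob \<Rightarrow> 'a \<Rightarrow> real)" where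
  "upd \<delta> t0 ob0 a0 = \<delta>(t0 := (\<delta> t0)(ob0 := (\<lambda>a. if a = a0 then 1 else 0)))"

lemma swap_lin: "finite X \<Longrightarrow> (\<Sum>a0\<in>X. (w a0::real) * (\<Sum>i\<in>I. f a0 i)) = (\<Sum>i\<in>I. \<Sum>a0\<in>X. w a0 * f a0 i)"
  unfolding sum_distrib_left by (rule sum.swap[of "\<lambda>a0 i. w a0 * f a0 i" I X])

lemma swap_lin': "finite X \<Longrightarrow> (\<Sum>i\<in>I. \<Sum>a0\<in>X. (w a0::real) * f a0 i) = (\<Sum>a0\<in>X. w a0 * (\<Sum>i\<in>I. f a0 i))"
  by (rule swap_lin[symmetric])

locale comp =
  fixes S :: "'s set" and Ob :: "'ob set" and A :: "'a set"
    and p0 :: "'s \<Rightarrow> real" and pe :: "'s \<Rightarrow> 'ob \<Rightarrow> real" and pt :: "'s \<Rightarrow> 'a \<Rightarrow> 's \<Rightarrow> real"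
begin

fun nuR :: "(nat \<Rightarrow> 'ob \<Rightarrow> 'a \<Rightarrow> real) \<Rightarrow> nat \<Rightarrow> 's \<Rightarrow> real" where
  "nuR \<delta> 0 s = p0 s"
| "nuR \<delta> (Suc 0) s = p0 s"
| "nuR \<delta> (Suc (Suc t)) s = (\<Sum>s''\<in>S. \<Sum>a''\<in>A. pt s'' a'' s * (\<Sum>ob\<in>Ob. \<delta> (Suc t) ob a'' * pe s'' ob * nuR \<delta> (Suc t) s''))"

definition tsoaR where "tsoaR \<delta> t s ob a = \<delta> t ob a * pe s ob * nuR \<delta> t s"
definition tsasR where "tsasR \<delta> t s a s' = pt s a s' * (\<Sum>ob\<in>Ob. tsoaR \<delta> t s ob a)"

end


context comp begin

definition stoch :: "nat \<Rightarrow> (nat \<Rightarrow> 'ob \<Rightarrow> 'a \<Rightarrow> real) \<Rightarrow> bool" where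
  "stoch T \<delta> \<longleftrightarrow> (\<forall>t\<in>{1..T}. \<forall>ob\<in>Ob. (\<forall>a\<in>A. \<delta> t ob a \<ge> 0) \<and> (\<Sum>a\<in>A. \<delta> t ob a) = 1)"

lemma nu_R: "t \<ge> 1 \<Longrightarrow> nu S A p0 (tsasR \<delta>) t s = nuR \<delta> t s"
proof (cases t)
  case (Suc n) assume "t \<ge> 1"
  show ?thesis
  proof (cases n)
    case 0 thus ?thesis using Suc by (simp add: nu_def)
  next
    case (Suc m)
    thus ?thesis using \<open>t = Suc n\<close> by (simp add: nu_def tsasR_def tsoaR_def sum_distrib_left)
  qed
qed simp

lemma nu_mix:
  assumes fP: "finite P" and l1: "(\<Sum>p\<in>P. l p) = 1"
  shows "nu S A p0 (\<lambda>t s a s'. \<Sum>p\<in>P. l p * TS p t s a s') t s = (\<Sum>p\<in>P. l p * nu S A p0 (TS p) t s)"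
proof (cases "t = 1")
  case True thus ?thesis using l1 by (simp add: nu_def sum_distrib_right[symmetric])
next
  case False thus ?thesis by (simp add: nu_def swap_lin'[OF fP])
qed

lemma mix_relax:
  fixes P :: "'p set"
  assumes fP: "finite P" and l0: "\<forall>p\<in>P. l p \<ge> 0" and l1: "(\<Sum>p\<in>P. l p) = 1"
    and pts: "\<forall>p\<in>P. inQd_relax T S Ob A p0 pe pt (TO p) (TS p) (DL p) \<and> cuts T S Ob A pe pt (TO p) (TS p) (X p)"
  shows "inQd_relax T S Ob A p0 pe pt (\<lambda>t s ob a. \<Sum>p\<in>P. l p * TO p t s ob a) (\<lambda>t s a s'. \<Sum>p\<in>P. l p * TS p t s a s')
            (\<lambda>t ob a. \<Sum>p\<in>P. l p * DL p t ob a)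
       \<and> cuts T S Ob A pe pt (\<lambda>t s ob a. \<Sum>p\<in>P. l p * TO p t s ob a) (\<lambda>t s a s'. \<Sum>p\<in>P. l p * TS p t s a s')
            (\<lambda>t s' a' s ob a. \<Sum>p\<in>P. l p * X p t s' a' s ob a)"
proof -
  note sw = swap_lin'[OF fP]
  note nm = nu_mix[OF fP l1]
  have QB: "\<And>p. p \<in> P \<Longrightarrow> Q_base T S Ob A p0 pt (TO p) (TS p) (DL p)" using pts unfolding inQd_relax_def by blast
  have MC: "\<And>p. p \<in> P \<Longrightarrow> mccormick T S Ob A p0 pe (TO p) (TS p) (DL p)" using pts unfolding inQd_relax_def by blast
  have DB: "\<And>p. p \<in> P \<Longrightarrow> \<forall>t\<in>{1..T}. \<forall>ob\<in>Ob. \<forall>a\<in>A. 0 \<le> DL p t ob a \<and> DL p t ob a \<le> 1"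
    using pts unfolding inQd_relax_def by blast
  have CU: "\<And>p. p \<in> P \<Longrightarrow> cuts T S Ob A pe pt (TO p) (TS p) (X p)" using pts by blast
  have q1: "TO p t s ob a \<ge> 0" if "p \<in> P" "t \<in> {1..T}" "s \<in> S" "ob \<in> Ob" "a \<in> A" for p t s ob a
    using QB[OF that(1)] that(2-) unfolding Q_base_def by blast
  have q2: "TS p t s a s' \<ge> 0" if "p \<in> P" "t \<in> {1..T}" "s \<in> S" "a \<in> A" "s' \<in> S" for p t s a s'
    using QB[OF that(1)] that(2-) unfolding Q_base_def by blast
  have q3: "DL p t ob a \<ge> 0" if "p \<in> P" "t \<in> {1..T}" "ob \<in> Ob" "a \<in> A" for p t ob a
    using QB[OF that(1)] that(2-) unfolding Q_base_def by blast
  have q4: "(\<Sum>a\<in>A. DL p t ob a) = 1" if "p \<in> P" "t \<in> {1..T}" "ob \<in> Ob" for p t ob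
    using QB[OF that(1)] that(2-) unfolding Q_base_def by blast
  have q5: "(\<Sum>ob\<in>Ob. \<Sum>a\<in>A. TO p t s ob a) = nu S A p0 (TS p) t s" if "p \<in> P" "t \<in> {1..T}" "s \<in> S" for p t s
    using QB[OF that(1)] that(2-) unfolding Q_base_def by blast
  have q6: "(\<Sum>sb\<in>S. TS p t s a sb) = (\<Sum>ob\<in>Ob. TO p t s ob a)" if "p \<in> P" "t \<in> {1..T}" "s \<in> S" "a \<in> A" for p t s a
    using QB[OF that(1)] that(2-) unfolding Q_base_def by blast
  have q7: "TS p t s a s' = pt s a s' * (\<Sum>sb\<in>S. TS p t s a sb)" if "p \<in> P" "t \<in> {1..T}" "s \<in> S" "a \<in> A" "s' \<in> S" for p t s a s'
    using QB[OF that(1)] that(2-) unfolding Q_base_def by blast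
  have m1: "TO p t s ob a \<le> pe s ob * nu S A p0 (TS p) t s" if "p \<in> P" "t \<in> {1..T}" "s \<in> S" "ob \<in> Ob" "a \<in> A" for p t s ob a
    using MC[OF that(1)] that(2-) unfolding mccormick_def by blast
  have m2: "TO p t s ob a \<le> DL p t ob a" if "p \<in> P" "t \<in> {1..T}" "s \<in> S" "ob \<in> Ob" "a \<in> A" for p t s ob a
    using MC[OF that(1)] that(2-) unfolding mccormick_def by blast
  have m3: "pe s ob * nu S A p0 (TS p) t s + DL p t ob a - 1 \<le> TO p t s ob a" if "p \<in> P" "t \<in> {1..T}" "s \<in> S" "ob \<in> Ob" "a \<in> A" for p t s ob a
    using MC[OF that(1)] that(2-) unfolding mccormick_def by blast
  have c1: "X p t s' a' s ob a \<ge> 0" if "p \<in> P" "t \<in> {2..T}" "s' \<in> S" "a' \<in> A" "s \<in> S" "ob \<in> Ob" "a \<in> A" for p t s' a' s ob a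
    using CU[OF that(1)] that(2-) unfolding cuts_def by blast
  have c2: "(\<Sum>s'\<in>S. \<Sum>a'\<in>A. X p t s' a' s ob a) = TO p t s ob a" if "p \<in> P" "t \<in> {2..T}" "s \<in> S" "ob \<in> Ob" "a \<in> A" for p t s ob a
    using CU[OF that(1)] that(2-) unfolding cuts_def by blast
  have c3: "(\<Sum>a\<in>A. X p t s' a' s ob a) = pe s ob * pt s' a' s * (\<Sum>sb\<in>S. TS p (t - 1) s' a' sb)"
    if "p \<in> P" "t \<in> {2..T}" "s' \<in> S" "a' \<in> A" "s \<in> S" "ob \<in> Ob" for p t s' a' s ob
    using CU[OF that(1)] that(2-) unfolding cuts_def by blast
  have c4: "X p t s' a' s ob a = pcond S pe pt s' a' ob s * (\<Sum>sb\<in>S. X p t s' a' sb ob a)"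
    if "p \<in> P" "t \<in> {2..T}" "s' \<in> S" "a' \<in> A" "s \<in> S" "ob \<in> Ob" "a \<in> A" for p t s' a' s ob a
    using CU[OF that(1)] that(2-) unfolding cuts_def by blast
  have lin1: "(\<Sum>p\<in>P. l p * c) = c" for c using l1 by (simp add: sum_distrib_right[symmetric])
  have mono: "(\<Sum>p\<in>P. l p * f p) \<le> (\<Sum>p\<in>P. l p * g p)" if "\<And>p. p \<in> P \<Longrightarrow> f p \<le> g p" for f g
    using l0 that by (intro sum_mono mult_left_mono) auto
  have nn: "0 \<le> (\<Sum>p\<in>P. l p * f p)" if "\<And>p. p \<in> P \<Longrightarrow> 0 \<le> f p" for f
    using l0 that by (intro sum_nonneg mult_nonneg_nonneg) auto
  have eqs: "(\<Sum>p\<in>P. l p * f p) = (\<Sum>p\<in>P. l p * g p)" if "\<And>p. p \<in> P \<Longrightarrow> f p = g p" for f g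
    using that by (intro sum.cong) auto
  have Qb: "Q_base T S Ob A p0 pt (\<lambda>t s ob a. \<Sum>p\<in>P. l p * TO p t s ob a) (\<lambda>t s a s'. \<Sum>p\<in>P. l p * TS p t s a s')
            (\<lambda>t ob a. \<Sum>p\<in>P. l p * DL p t ob a)"
    unfolding Q_base_def
  proof (intro ballI conjI)
    fix t assume t: "t \<in> {1..T}"
    show "0 \<le> (\<Sum>p\<in>P. l p * TO p t s ob a)" if "s \<in> S" "ob \<in> Ob" "a \<in> A" for s ob a
      by (rule nn) (use q1 t that in auto)
    show "0 \<le> (\<Sum>p\<in>P. l p * TS p t s a s')" if "s \<in> S" "a \<in> A" "s' \<in> S" for s a s'
      by (rule nn) (use q2 t that in auto)
    show "0 \<le> (\<Sum>p\<in>P. l p * DL p t ob a)" if "ob \<in> Ob" "a \<in> A" for ob a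
      by (rule nn) (use q3 t that in auto)
    show "(\<Sum>a\<in>A. \<Sum>p\<in>P. l p * DL p t ob a) = 1" if "ob \<in> Ob" for ob
      unfolding sw using lin1[of 1] q4 t that by (auto intro!: eqs[THEN trans])
    show "(\<Sum>ob\<in>Ob. \<Sum>a\<in>A. \<Sum>p\<in>P. l p * TO p t s ob a) = nu S A p0 (\<lambda>t s a s'. \<Sum>p\<in>P. l p * TS p t s a s') t s"
      if "s \<in> S" for s
      unfolding sw nm using q5 t that by (auto intro!: eqs)
    show "(\<Sum>sb\<in>S. \<Sum>p\<in>P. l p * TS p t s a sb) = (\<Sum>ob\<in>Ob. \<Sum>p\<in>P. l p * TO p t s ob a)"
      if "s \<in> S" "a \<in> A" for s a
      unfolding sw using q6 t that by (auto intro!: eqs)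
    show "(\<Sum>p\<in>P. l p * TS p t s a s') = pt s a s' * (\<Sum>sb\<in>S. \<Sum>p\<in>P. l p * TS p t s a sb)"
      if "s \<in> S" "a \<in> A" "s' \<in> S" for s a s'
    proof -
      have "(\<Sum>p\<in>P. l p * TS p t s a s') = (\<Sum>p\<in>P. l p * (pt s a s' * (\<Sum>sb\<in>S. TS p t s a sb)))"
        using q7 t that by (auto intro!: eqs)
      thus ?thesis unfolding sw by (simp add: sum_distrib_left mult.left_commute)
    qed
  qed
  have MCm: "mccormick T S Ob A p0 pe (\<lambda>t s ob a. \<Sum>p\<in>P. l p * TO p t s ob a) (\<lambda>t s a s'. \<Sum>p\<in>P. l p * TS p t s a s')
            (\<lambda>t ob a. \<Sum>p\<in>P. l p * DL p t ob a)"
    unfolding mccormick_def nm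
  proof (intro ballI conjI)
    fix t s ob a assume t: "t \<in> {1..T}" and s: "s \<in> S" and ob: "ob \<in> Ob" and a: "a \<in> A"
    show "(\<Sum>p\<in>P. l p * TO p t s ob a) \<le> pe s ob * (\<Sum>p\<in>P. l p * nu S A p0 (TS p) t s)"
      unfolding sum_distrib_left by (subst mult.left_commute, rule mono) (use m1 t s ob a in auto)
    show "(\<Sum>p\<in>P. l p * TO p t s ob a) \<le> (\<Sum>p\<in>P. l p * DL p t ob a)"
      by (rule mono) (use m2 t s ob a in auto)
    have "pe s ob * (\<Sum>p\<in>P. l p * nu S A p0 (TS p) t s) + (\<Sum>p\<in>P. l p * DL p t ob a) - 1
        = (\<Sum>p\<in>P. l p * (pe s ob * nu S A p0 (TS p) t s + DL p t ob a - 1))"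
      using lin1[of 1] by (simp add: sum_distrib_left algebra_simps sum.distrib sum_subtractf)
    also have "\<dots> \<le> (\<Sum>p\<in>P. l p * TO p t s ob a)"
      by (rule mono) (use m3 t s ob a in auto)
    finally show "pe s ob * (\<Sum>p\<in>P. l p * nu S A p0 (TS p) t s) + (\<Sum>p\<in>P. l p * DL p t ob a) - 1 \<le> (\<Sum>p\<in>P. l p * TO p t s ob a)" .
  qed
  have DBm: "\<forall>t\<in>{1..T}. \<forall>ob\<in>Ob. \<forall>a\<in>A. 0 \<le> (\<Sum>p\<in>P. l p * DL p t ob a) \<and> (\<Sum>p\<in>P. l p * DL p t ob a) \<le> 1"
  proof (intro ballI conjI)
    fix t ob a assume "t \<in> {1..T}" "ob \<in> Ob" "a \<in> A"
    thus "0 \<le> (\<Sum>p\<in>P. l p * DL p t ob a)" using DB by (intro nn) auto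
    have "(\<Sum>p\<in>P. l p * DL p t ob a) \<le> (\<Sum>p\<in>P. l p * 1)" by (rule mono) (use DB \<open>t \<in> _\<close> \<open>ob \<in> _\<close> \<open>a \<in> _\<close> in auto)
    thus "(\<Sum>p\<in>P. l p * DL p t ob a) \<le> 1" using lin1[of 1] by simp
  qed
  have CUm: "cuts T S Ob A pe pt (\<lambda>t s ob a. \<Sum>p\<in>P. l p * TO p t s ob a) (\<lambda>t s a s'. \<Sum>p\<in>P. l p * TS p t s a s')
            (\<lambda>t s' a' s ob a. \<Sum>p\<in>P. l p * X p t s' a' s ob a)"
    unfolding cuts_def
  proof (intro ballI conjI)
    fix t assume t: "t \<in> {2..T}"
    show "0 \<le> (\<Sum>p\<in>P. l p * X p t s' a' s ob a)" if "s' \<in> S" "a' \<in> A" "s \<in> S" "ob \<in> Ob" "a \<in> A" for s' a' s ob a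
      by (rule nn) (use c1 t that in auto)
    show "(\<Sum>s'\<in>S. \<Sum>a'\<in>A. \<Sum>p\<in>P. l p * X p t s' a' s ob a) = (\<Sum>p\<in>P. l p * TO p t s ob a)"
      if "s \<in> S" "ob \<in> Ob" "a \<in> A" for s ob a
      unfolding sw using c2 t that by (auto intro!: eqs)
    show "(\<Sum>a\<in>A. \<Sum>p\<in>P. l p * X p t s' a' s ob a) = pe s ob * pt s' a' s * (\<Sum>sb\<in>S. \<Sum>p\<in>P. l p * TS p (t - 1) s' a' sb)"
      if "s' \<in> S" "a' \<in> A" "s \<in> S" "ob \<in> Ob" for s' a' s ob
    proof -
      have "(\<Sum>a\<in>A. \<Sum>p\<in>P. l p * X p t s' a' s ob a) = (\<Sum>p\<in>P. l p * (pe s ob * pt s' a' s * (\<Sum>sb\<in>S. TS p (t - 1) s' a' sb)))"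
        unfolding sw using c3 t that by (auto intro!: eqs)
      thus ?thesis unfolding sw by (simp add: sum_distrib_left mult.left_commute)
    qed
    show "(\<Sum>p\<in>P. l p * X p t s' a' s ob a) = pcond S pe pt s' a' ob s * (\<Sum>sb\<in>S. \<Sum>p\<in>P. l p * X p t s' a' sb ob a)"
      if "s' \<in> S" "a' \<in> A" "s \<in> S" "ob \<in> Ob" "a \<in> A" for s' a' s ob a
    proof -
      have "(\<Sum>p\<in>P. l p * X p t s' a' s ob a) = (\<Sum>p\<in>P. l p * (pcond S pe pt s' a' ob s * (\<Sum>sb\<in>S. X p t s' a' sb ob a)))"
        using c4 t that by (auto intro!: eqs)
      thus ?thesis unfolding sw by (simp add: sum_distrib_left mult.left_commute)
    qed
  qed
  show ?thesis using Qb MCm DBm CUm unfolding inQd_relax_def by blast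
qed

end

locale compp = comp +
  assumes P: "pomdp S Ob A p0 pe pt"
begin

lemma fin: "finite S" "finite Ob" "finite A" using P by (auto simp: pomdp_def)
lemma p0_nn: "s \<in> S \<Longrightarrow> p0 s \<ge> 0" using P by (auto simp: pomdp_def)
lemma p0_sum: "(\<Sum>s\<in>S. p0 s) = 1" using P by (auto simp: pomdp_def)
lemma pe_nn: "s \<in> S \<Longrightarrow> ob \<in> Ob \<Longrightarrow> pe s ob \<ge> 0" using P by (auto simp: pomdp_def)
lemma pe_sum: "s \<in> S \<Longrightarrow> (\<Sum>ob\<in>Ob. pe s ob) = 1" using P by (auto simp: pomdp_def)
lemma pt_nn: "s \<in> S \<Longrightarrow> a \<in> A \<Longrightarrow> s' \<in> S \<Longrightarrow> pt s a s' \<ge> 0" using P by (auto simp: pomdp_def)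
lemma pt_sum: "s \<in> S \<Longrightarrow> a \<in> A \<Longrightarrow> (\<Sum>s'\<in>S. pt s a s') = 1" using P by (auto simp: pomdp_def)
lemma pe_le1: "s \<in> S \<Longrightarrow> ob \<in> Ob \<Longrightarrow> pe s ob \<le> 1"
  using member_le_sum[of ob Ob "pe s"] pe_nn pe_sum fin by fastforce

lemma nuR_nn: "stoch T \<delta> \<Longrightarrow> t \<le> T \<Longrightarrow> s \<in> S \<Longrightarrow> nuR \<delta> t s \<ge> 0"
proof (induction \<delta> t s rule: nuR.induct)
  case (3 \<delta> t s)
  have "0 \<le> \<delta> (Suc t) ob a'' * pe s'' ob * nuR \<delta> (Suc t) s''" if "s'' \<in> S" "a'' \<in> A" "ob \<in> Ob" for s'' a'' ob
    using 3 that pe_nn by (auto simp: stoch_def intro!: mult_nonneg_nonneg)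
  hence "0 \<le> pt s'' a'' s * (\<Sum>ob\<in>Ob. \<delta> (Suc t) ob a'' * pe s'' ob * nuR \<delta> (Suc t) s'')"
    if "s'' \<in> S" "a'' \<in> A" for s'' a''
    using that 3 by (intro mult_nonneg_nonneg[OF pt_nn sum_nonneg]) auto
  thus ?case by (simp add: sum_nonneg)
qed (auto simp: p0_nn)

lemma sum_tsoaR: "stoch T \<delta> \<Longrightarrow> t \<in> {1..T} \<Longrightarrow> s \<in> S \<Longrightarrow> (\<Sum>ob\<in>Ob. \<Sum>a\<in>A. tsoaR \<delta> t s ob a) = nuR \<delta> t s"
proof -
  assume st: "stoch T \<delta>" and t: "t \<in> {1..T}" and s: "s \<in> S"
  have "(\<Sum>ob\<in>Ob. \<Sum>a\<in>A. tsoaR \<delta> t s ob a) = (\<Sum>ob\<in>Ob. pe s ob * nuR \<delta> t s * (\<Sum>a\<in>A. \<delta> t ob a))"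
    by (simp add: tsoaR_def sum_distrib_left sum_distrib_right algebra_simps)
  also have "\<dots> = (\<Sum>ob\<in>Ob. pe s ob * nuR \<delta> t s)" using st t by (auto simp: stoch_def intro!: sum.cong)
  also have "\<dots> = nuR \<delta> t s" using pe_sum[OF s] by (simp add: sum_distrib_right[symmetric])
  finally show ?thesis .
qed

lemma nuR_Suc: "nuR \<delta> (Suc t) s' = (\<Sum>s\<in>S. \<Sum>a\<in>A. tsasR \<delta> t s a s')" if t1: "t \<ge> 1"
proof -
  obtain n where "t = Suc n" using t1 Suc_le_D[of 0 t] by auto
  thus ?thesis by (simp add: tsasR_def tsoaR_def sum_distrib_left)
qed

lemma nuR_mass: "stoch T \<delta> \<Longrightarrow> t \<in> {1..T} \<Longrightarrow> (\<Sum>s\<in>S. nuR \<delta> t s) = 1"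
proof (induction t)
  case 0 thus ?case by simp
next
  case (Suc t)
  show ?case
  proof (cases "t = 0")
    case True thus ?thesis using p0_sum by simp
  next
    case False
    hence t: "t \<in> {1..T}" using Suc by auto
    have "(\<Sum>s'\<in>S. nuR \<delta> (Suc t) s') = (\<Sum>s'\<in>S. \<Sum>s\<in>S. \<Sum>a\<in>A. pt s a s' * (\<Sum>ob\<in>Ob. tsoaR \<delta> t s ob a))"
      using False by (simp add: nuR_Suc tsasR_def)
    also have "\<dots> = (\<Sum>s\<in>S. \<Sum>s'\<in>S. \<Sum>a\<in>A. pt s a s' * (\<Sum>ob\<in>Ob. tsoaR \<delta> t s ob a))"
      by (rule sum.swap)
    also have "\<dots> = (\<Sum>s\<in>S. \<Sum>a\<in>A. \<Sum>s'\<in>S. pt s a s' * (\<Sum>ob\<in>Ob. tsoaR \<delta> t s ob a))"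
      by (intro sum.cong refl sum.swap)
    also have "\<dots> = (\<Sum>s\<in>S. \<Sum>a\<in>A. (\<Sum>s'\<in>S. pt s a s') * (\<Sum>ob\<in>Ob. tsoaR \<delta> t s ob a))"
      by (simp add: sum_distrib_right)
    also have "\<dots> = (\<Sum>s\<in>S. \<Sum>a\<in>A. \<Sum>ob\<in>Ob. tsoaR \<delta> t s ob a)"
      by (intro sum.cong) (auto simp: pt_sum)
    also have "\<dots> = (\<Sum>s\<in>S. \<Sum>ob\<in>Ob. \<Sum>a\<in>A. tsoaR \<delta> t s ob a)"
      by (intro sum.cong refl sum.swap)
    also have "\<dots> = (\<Sum>s\<in>S. nuR \<delta> t s)"
      using sum_tsoaR[OF Suc.prems(1) t] by (intro sum.cong refl) simp
    finally show ?thesis using Suc t by simp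
  qed
qed

lemma nuR_le1: "stoch T \<delta> \<Longrightarrow> t \<in> {1..T} \<Longrightarrow> s \<in> S \<Longrightarrow> nuR \<delta> t s \<le> 1"
proof -
  assume a: "stoch T \<delta>" "t \<in> {1..T}" "s \<in> S"
  have "nuR \<delta> t s \<le> (\<Sum>s\<in>S. nuR \<delta> t s)"
    by (rule member_le_sum) (use a fin nuR_nn[of T \<delta> t] in auto)
  thus ?thesis using nuR_mass[OF a(1,2)] by simp
qed

lemma tsoaR_nn: "stoch T \<delta> \<Longrightarrow> t \<in> {1..T} \<Longrightarrow> s \<in> S \<Longrightarrow> ob \<in> Ob \<Longrightarrow> a \<in> A \<Longrightarrow> tsoaR \<delta> t s ob a \<ge> 0"
  unfolding tsoaR_def using nuR_nn[of T \<delta> t s] pe_nn[of s ob] by (auto simp: stoch_def intro!: mult_nonneg_nonneg)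

lemma tsasR_nn: "stoch T \<delta> \<Longrightarrow> t \<in> {1..T} \<Longrightarrow> s \<in> S \<Longrightarrow> a \<in> A \<Longrightarrow> s' \<in> S \<Longrightarrow> tsasR \<delta> t s a s' \<ge> 0"
  unfolding tsasR_def using tsoaR_nn[of T \<delta> t s _ a] pt_nn[of s a s'] by (auto intro!: mult_nonneg_nonneg sum_nonneg)

lemma sum_tsasR: "s \<in> S \<Longrightarrow> a \<in> A \<Longrightarrow> (\<Sum>sb\<in>S. tsasR \<delta> t s a sb) = (\<Sum>ob\<in>Ob. tsoaR \<delta> t s ob a)"
  unfolding tsasR_def by (simp add: sum_distrib_right[symmetric] pt_sum)

lemma Qb_R: "stoch T \<delta> \<Longrightarrow> Q_base T S Ob A p0 pt (tsoaR \<delta>) (tsasR \<delta>) \<delta>"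
  unfolding Q_base_def
  using tsoaR_nn[of T \<delta>] tsasR_nn[of T \<delta>] sum_tsoaR[of T \<delta>] nu_R[of _ \<delta>] sum_tsasR[of _ _ \<delta>]
  by (auto simp: stoch_def tsasR_def[of \<delta> _ _ _ ])

lemma inQ_R: "stoch T \<delta> \<Longrightarrow> inQ T S Ob A p0 pe pt (tsoaR \<delta>) (tsasR \<delta>) \<delta>"
  unfolding inQ_def using Qb_R[of T \<delta>] sum_tsoaR[of T \<delta>] by (auto simp: tsoaR_def)

lemma mcc_R: "stoch T \<delta> \<Longrightarrow> mccormick T S Ob A p0 pe (tsoaR \<delta>) (tsasR \<delta>) \<delta>"
  unfolding mccormick_def
proof (intro ballI conjI)
  fix t s ob a assume st: "stoch T \<delta>" and t: "t \<in> {1..T}" and s: "s \<in> S" and ob: "ob \<in> Ob" and a: "a \<in> A"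
  have nu: "nu S A p0 (tsasR \<delta>) t s = nuR \<delta> t s" using t nu_R by auto
  have d: "0 \<le> \<delta> t ob a" "\<delta> t ob a \<le> 1"
  proof -
    show "0 \<le> \<delta> t ob a" using st t ob a by (auto simp: stoch_def)
    have "\<delta> t ob a \<le> (\<Sum>a\<in>A. \<delta> t ob a)" by (rule member_le_sum) (use st t ob a fin in \<open>auto simp: stoch_def\<close>)
    thus "\<delta> t ob a \<le> 1" using st t ob by (auto simp: stoch_def)
  qed
  have pn: "0 \<le> pe s ob * nuR \<delta> t s" "pe s ob * nuR \<delta> t s \<le> 1"
    using pe_nn[OF s ob] pe_le1[OF s ob] nuR_nn[OF st _ s, of t] nuR_le1[OF st t s] t
    by (auto intro: mult_le_one)
  show "tsoaR \<delta> t s ob a \<le> pe s ob * nu S A p0 (tsasR \<delta>) t s"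
    unfolding nu tsoaR_def using d pn mult_left_le_one_le[of "pe s ob * nuR \<delta> t s" "\<delta> t ob a"] by (simp add: mult.assoc)
  show "tsoaR \<delta> t s ob a \<le> \<delta> t ob a"
    unfolding tsoaR_def using d pn mult_left_le[of "pe s ob * nuR \<delta> t s" "\<delta> t ob a"] by (simp add: mult.assoc)
  have "0 \<le> (1 - \<delta> t ob a) * (1 - pe s ob * nuR \<delta> t s)" using d pn by simp
  thus "pe s ob * nu S A p0 (tsasR \<delta>) t s + \<delta> t ob a - 1 \<le> tsoaR \<delta> t s ob a"
    unfolding nu tsoaR_def by (simp add: algebra_simps)
qed

lemma relax_R: "stoch T \<delta> \<Longrightarrow> inQd_relax T S Ob A p0 pe pt (tsoaR \<delta>) (tsasR \<delta>) \<delta>"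
proof -
  assume st: "stoch T \<delta>"
  have "\<delta> t ob a \<le> 1" if "t \<in> {1..T}" "ob \<in> Ob" "a \<in> A" for t ob a
  proof -
    have "\<delta> t ob a \<le> (\<Sum>a\<in>A. \<delta> t ob a)" by (rule member_le_sum) (use st that fin in \<open>auto simp: stoch_def\<close>)
    thus ?thesis using st that by (auto simp: stoch_def)
  qed
  thus ?thesis unfolding inQd_relax_def using Qb_R[OF st] mcc_R[OF st] st by (auto simp: stoch_def)
qed

lemma inQd_R: "stoch T \<delta> \<Longrightarrow> (\<forall>t\<in>{1..T}. \<forall>ob\<in>Ob. \<forall>a\<in>A. \<delta> t ob a = 0 \<or> \<delta> t ob a = 1) \<Longrightarrow>
    inQd T S Ob A p0 pe pt (tsoaR \<delta>) (tsasR \<delta>) \<delta>"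
  unfolding inQd_def using Qb_R mcc_R by auto

definition xR where
  "xR \<delta> t s' a' s ob a = (\<Sum>sb\<in>S. tsasR \<delta> (t - 1) s' a' sb) * pt s' a' s * pe s ob * \<delta> t ob a"

lemma cuts_R: "stoch T \<delta> \<Longrightarrow> cuts T S Ob A pe pt (tsoaR \<delta>) (tsasR \<delta>) (xR \<delta>)"
  unfolding cuts_def
proof (intro ballI conjI)
  fix t assume st: "stoch T \<delta>" and t: "t \<in> {2..T}"
  have t1: "t - 1 \<in> {1..T}" using t by auto
  have tsum_nn: "0 \<le> (\<Sum>sb\<in>S. tsasR \<delta> (t - 1) s' a' sb)" if "s' \<in> S" "a' \<in> A" for s' a'
    using tsasR_nn[OF st t1] that by (auto intro: sum_nonneg)
  have dnn: "0 \<le> \<delta> t ob a" if "ob \<in> Ob" "a \<in> A" for ob a using st t that by (auto simp: stoch_def)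
  show "0 \<le> xR \<delta> t s' a' s ob a" if "s' \<in> S" "a' \<in> A" "s \<in> S" "ob \<in> Ob" "a \<in> A" for s' a' s ob a
    unfolding xR_def using tsum_nn[of s' a'] pt_nn[of s' a' s] pe_nn[of s ob] dnn[of ob a] that
    by (intro mult_nonneg_nonneg) auto
  show "(\<Sum>s'\<in>S. \<Sum>a'\<in>A. xR \<delta> t s' a' s ob a) = tsoaR \<delta> t s ob a" if "s \<in> S" "ob \<in> Ob" "a \<in> A" for s ob a
  proof -
    have e1: "(\<Sum>sb\<in>S. tsasR \<delta> (t - 1) s' a' sb) * pt s' a' s = tsasR \<delta> (t - 1) s' a' s"
      if "s' \<in> S" "a' \<in> A" for s' a'
      using sum_tsasR[OF that, of \<delta> "t-1"] by (simp add: tsasR_def mult.commute)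
    have "(\<Sum>s'\<in>S. \<Sum>a'\<in>A. xR \<delta> t s' a' s ob a) = (\<Sum>s'\<in>S. \<Sum>a'\<in>A. tsasR \<delta> (t - 1) s' a' s) * pe s ob * \<delta> t ob a"
    proof -
      have "xR \<delta> t s' a' s ob a = tsasR \<delta> (t - 1) s' a' s * pe s ob * \<delta> t ob a" if "s' \<in> S" "a' \<in> A" for s' a'
        unfolding xR_def e1[OF that, symmetric] by simp
      thus ?thesis by (simp add: sum_distrib_right)
    qed
    also have "(\<Sum>s'\<in>S. \<Sum>a'\<in>A. tsasR \<delta> (t - 1) s' a' s) = nuR \<delta> t s"
      using nuR_Suc[of "t-1" \<delta> s] t by auto
    finally show ?thesis by (simp add: tsoaR_def mult.commute mult.left_commute)
  qed
  show "(\<Sum>a\<in>A. xR \<delta> t s' a' s ob a) = pe s ob * pt s' a' s * (\<Sum>sb\<in>S. tsasR \<delta> (t - 1) s' a' sb)"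
    if "s' \<in> S" "a' \<in> A" "s \<in> S" "ob \<in> Ob" for s' a' s ob
  proof -
    have "(\<Sum>a\<in>A. \<delta> t ob a) = 1" using st t that by (auto simp: stoch_def)
    hence "(\<Sum>a\<in>A. xR \<delta> t s' a' s ob a) = ((\<Sum>sb\<in>S. tsasR \<delta> (t - 1) s' a' sb) * pt s' a' s * pe s ob) * (\<Sum>a\<in>A. \<delta> t ob a)"
      unfolding xR_def sum_distrib_left by (simp add: mult.assoc)
    thus ?thesis using \<open>(\<Sum>a\<in>A. \<delta> t ob a) = 1\<close> by (simp add: mult.commute mult.left_commute)
  qed
  show "xR \<delta> t s' a' s ob a = pcond S pe pt s' a' ob s * (\<Sum>sb\<in>S. xR \<delta> t s' a' sb ob a)"
    if "s' \<in> S" "a' \<in> A" "s \<in> S" "ob \<in> Ob" "a \<in> A" for s' a' s ob a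
  proof -
    define Z where "Z = (\<Sum>sb\<in>S. pe sb ob * pt s' a' sb)"
    define c where "c = (\<Sum>sb\<in>S. tsasR \<delta> (t - 1) s' a' sb) * \<delta> t ob a"
    have sx: "(\<Sum>sb\<in>S. xR \<delta> t s' a' sb ob a) = c * Z"
      unfolding xR_def Z_def c_def sum_distrib_left by (intro sum.cong refl) (simp add: algebra_simps)
    have xx: "xR \<delta> t s' a' s ob a = c * (pe s ob * pt s' a' s)" unfolding xR_def c_def by (simp add: algebra_simps)
    show ?thesis
    proof (cases "Z = 0")
      case True
      have "pe s ob * pt s' a' s = 0"
      proof -
        have "\<forall>sb\<in>S. pe sb ob * pt s' a' sb = 0"
          using True fin pe_nn pt_nn that unfolding Z_def
          by (subst sum_nonneg_eq_0_iff[symmetric]) (auto intro: mult_nonneg_nonneg)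
        thus ?thesis using that by auto
      qed
      thus ?thesis using xx sx True by (simp add: pcond_def Z_def[symmetric])
    next
      case False
      thus ?thesis using xx sx by (simp add: pcond_def Z_def[symmetric])
    qed
  qed
qed

lemma Qb_stoch: "Q_base T S Ob A p0 pt tsoa tsas dl \<Longrightarrow> stoch T dl"
  unfolding Q_base_def stoch_def by auto

lemma uniq_nu:
  assumes Qb: "Q_base T S Ob A p0 pt tsoa tsas dl"
    and v: "\<forall>t\<in>{1..T}. \<forall>s\<in>S. \<forall>ob\<in>Ob. \<forall>a\<in>A. tsoa t s ob a = dl t ob a * pe s ob * nu S A p0 tsas t s"
  shows "t \<in> {1..T} \<Longrightarrow> s \<in> S \<Longrightarrow> nu S A p0 tsas t s = nuR dl t s"
proof (induction t arbitrary: s)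
  case 0 thus ?case by simp
next
  case (Suc t)
  show ?case
  proof (cases "t = 0")
    case True thus ?thesis by (simp add: nu_def)
  next
    case False
    hence t: "t \<in> {1..T}" using Suc by auto
    have "tsas t s'' a'' s = tsasR dl t s'' a'' s" if "s'' \<in> S" "a'' \<in> A" for s'' a''
    proof -
      have iv: "tsas t s'' a'' s = pt s'' a'' s * (\<Sum>sb\<in>S. tsas t s'' a'' sb)"
        and iii: "(\<Sum>sb\<in>S. tsas t s'' a'' sb) = (\<Sum>ob\<in>Ob. tsoa t s'' ob a'')"
        using Qb t that Suc.prems(2) unfolding Q_base_def by blast+
      have "tsas t s'' a'' s = pt s'' a'' s * (\<Sum>ob\<in>Ob. tsoa t s'' ob a'')"
        using iv iii by simp
      also have "(\<Sum>ob\<in>Ob. tsoa t s'' ob a'') = (\<Sum>ob\<in>Ob. tsoaR dl t s'' ob a'')"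
        using v t that Suc.IH[OF t that(1)] by (auto simp: tsoaR_def intro!: sum.cong)
      finally show ?thesis by (simp add: tsasR_def)
    qed
    hence "nu S A p0 tsas (Suc t) s = (\<Sum>s''\<in>S. \<Sum>a''\<in>A. tsasR dl t s'' a'' s)"
      using False by (simp add: nu_def)
    also have "\<dots> = nuR dl (Suc t) s" using nuR_Suc[of t dl s] False by simp
    finally show ?thesis .
  qed
qed

lemma uniq:
  assumes Qb: "Q_base T S Ob A p0 pt tsoa tsas dl"
    and v: "\<forall>t\<in>{1..T}. \<forall>s\<in>S. \<forall>ob\<in>Ob. \<forall>a\<in>A. tsoa t s ob a = dl t ob a * pe s ob * nu S A p0 tsas t s"
  assumes t: "t \<in> {1..T}" and s: "s \<in> S"
  shows "\<forall>ob\<in>Ob. \<forall>a\<in>A. tsoa t s ob a = tsoaR dl t s ob a"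
    and "\<forall>a\<in>A. \<forall>s'\<in>S. tsas t s a s' = tsasR dl t s a s'"
proof -
  show 1: "\<forall>ob\<in>Ob. \<forall>a\<in>A. tsoa t s ob a = tsoaR dl t s ob a"
    using v t s uniq_nu[OF Qb v t s] by (auto simp: tsoaR_def)
  show "\<forall>a\<in>A. \<forall>s'\<in>S. tsas t s a s' = tsasR dl t s a s'"
  proof (intro ballI)
    fix a s' assume a: "a \<in> A" and s': "s' \<in> S"
    have iv: "tsas t s a s' = pt s a s' * (\<Sum>sb\<in>S. tsas t s a sb)"
      and iii: "(\<Sum>sb\<in>S. tsas t s a sb) = (\<Sum>ob\<in>Ob. tsoa t s ob a)"
      using Qb t a s s' unfolding Q_base_def by blast+
    show "tsas t s a s' = tsasR dl t s a s'"
      using iv iii 1 a unfolding tsasR_def by simp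
  qed
qed

lemma inQ_v: "inQ T S Ob A p0 pe pt tsoa tsas dl \<Longrightarrow>
   \<forall>t\<in>{1..T}. \<forall>s\<in>S. \<forall>ob\<in>Ob. \<forall>a\<in>A. tsoa t s ob a = dl t ob a * pe s ob * nu S A p0 tsas t s"
proof (intro ballI)
  fix t s ob a assume Q: "inQ T S Ob A p0 pe pt tsoa tsas dl" and t: "t \<in> {1..T}" and s: "s \<in> S" and ob: "ob \<in> Ob" and a: "a \<in> A"
  have 1: "tsoa t s ob a = dl t ob a * pe s ob * (\<Sum>ob'\<in>Ob. \<Sum>a'\<in>A. tsoa t s ob' a')"
    using Q t s ob a unfolding inQ_def by blast
  have 2: "(\<Sum>ob'\<in>Ob. \<Sum>a'\<in>A. tsoa t s ob' a') = nu S A p0 tsas t s"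
    using Q t s unfolding inQ_def Q_base_def by blast
  show "tsoa t s ob a = dl t ob a * pe s ob * nu S A p0 tsas t s" using 1 2 by simp
qed

lemma inQd_v: "inQd T S Ob A p0 pe pt tsoa tsas dl \<Longrightarrow>
   \<forall>t\<in>{1..T}. \<forall>s\<in>S. \<forall>ob\<in>Ob. \<forall>a\<in>A. tsoa t s ob a = dl t ob a * pe s ob * nu S A p0 tsas t s"
proof (intro ballI)
  fix t s ob a assume Q: "inQd T S Ob A p0 pe pt tsoa tsas dl" and t: "t \<in> {1..T}" and s: "s \<in> S" and ob: "ob \<in> Ob" and a: "a \<in> A"
  have m: "tsoa t s ob a \<le> pe s ob * nu S A p0 tsas t s" "tsoa t s ob a \<le> dl t ob a"
       "tsoa t s ob a \<ge> pe s ob * nu S A p0 tsas t s + dl t ob a - 1"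
    using Q t s ob a unfolding inQd_def mccormick_def by auto
  have nn: "tsoa t s ob a \<ge> 0" using Q t s ob a unfolding inQd_def Q_base_def by auto
  have "dl t ob a = 0 \<or> dl t ob a = 1" using Q t ob a unfolding inQd_def by auto
  thus "tsoa t s ob a = dl t ob a * pe s ob * nu S A p0 tsas t s" using m nn by auto
qed

lemma inQd_inQ: "inQd T S Ob A p0 pe pt tsoa tsas dl \<Longrightarrow> inQ T S Ob A p0 pe pt tsoa tsas dl"
proof -
  assume Q: "inQd T S Ob A p0 pe pt tsoa tsas dl"
  have Qb: "Q_base T S Ob A p0 pt tsoa tsas dl" using Q unfolding inQd_def by auto
  show ?thesis unfolding inQ_def using Qb inQd_v[OF Q] Qb unfolding Q_base_def by auto
qed


lemma nat3: obtains "n = 0" | "n = Suc 0" | m where "n = Suc (Suc m)"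
proof (cases n)
  case 0 thus ?thesis using that(1) by simp
next
  case (Suc k) thus ?thesis using that(2,3) by (cases k) auto
qed

lemma nuR_E: "(\<forall>t'<t. \<delta> t' = \<delta>' t') \<Longrightarrow> nuR \<delta> t s = nuR \<delta>' t s"
proof (induction t arbitrary: s rule: less_induct)
  case (less t)
  show ?case
  proof (cases t rule: nat3)
    case (3 n)
    have "nuR \<delta> (Suc n) s'' = nuR \<delta>' (Suc n) s''" for s'' using less 3 by auto
    moreover have "\<delta> (Suc n) = \<delta>' (Suc n)" using less 3 by auto
    ultimately show ?thesis using 3 by simp
  qed auto
qed


lemma M: "stoch T \<delta> \<Longrightarrow> t0 \<in> {1..T} \<Longrightarrow> ob0 \<in> Ob \<Longrightarrow> ob \<in> Ob \<Longrightarrow> a \<in> A \<Longrightarrow>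
   (\<Sum>a0\<in>A. \<delta> t0 ob0 a0 * upd \<delta> t0 ob0 a0 t0 ob a) = \<delta> t0 ob a"
proof -
  assume st: "stoch T \<delta>" and t0: "t0 \<in> {1..T}" and ob0: "ob0 \<in> Ob" and ob: "ob \<in> Ob" and a: "a \<in> A"
  show ?thesis
  proof (cases "ob = ob0")
    case True
    have "(\<Sum>a0\<in>A. \<delta> t0 ob0 a0 * upd \<delta> t0 ob0 a0 t0 ob a) = (\<Sum>a0\<in>A. if a0 = a then \<delta> t0 ob0 a0 else 0)"
      using True by (intro sum.cong) (auto simp: upd_def)
    thus ?thesis using a fin True by simp
  next
    case False
    have "(\<Sum>a0\<in>A. \<delta> t0 ob0 a0 * upd \<delta> t0 ob0 a0 t0 ob a) = (\<Sum>a0\<in>A. \<delta> t0 ob0 a0) * \<delta> t0 ob a"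
      using False by (simp add: upd_def sum_distrib_right)
    thus ?thesis using st t0 ob0 by (simp add: stoch_def)
  qed
qed

lemma N:
  assumes st: "stoch T \<delta>" and t0: "t0 \<in> {1..T}" and ob0: "ob0 \<in> Ob"
  shows "nuR \<delta> tt s = (\<Sum>a0\<in>A. \<delta> t0 ob0 a0 * nuR (upd \<delta> t0 ob0 a0) tt s)"
proof (induction tt arbitrary: s rule: less_induct)
  case (less tt)
  have W1: "(\<Sum>a0\<in>A. \<delta> t0 ob0 a0) = 1" using st t0 ob0 by (simp add: stoch_def)
  have E: "nuR (upd \<delta> t0 ob0 a0) t s = nuR \<delta> t s" if "t \<le> t0" for a0 t s
    by (rule nuR_E) (use that in \<open>auto simp: upd_def\<close>)
  show ?case
  proof (cases tt rule: nat3)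
    case 1 thus ?thesis
      using W1 by (simp add: sum_distrib_right[symmetric])
  next
    case 2 thus ?thesis
      using W1 by (simp add: sum_distrib_right[symmetric])
  next
    case (3 t)
    have IH: "\<And>x. nuR \<delta> (Suc t) x = (\<Sum>a0\<in>A. \<delta> t0 ob0 a0 * nuR (upd \<delta> t0 ob0 a0) (Suc t) x)"
      using less 3 by auto
    have tt: "tt = Suc (Suc t)" using 3 by simp
    show ?thesis unfolding tt
    proof (cases "Suc (Suc t) \<le> t0")
      case True
      have e: "(\<Sum>a0\<in>A. \<delta> t0 ob0 a0 * nuR (upd \<delta> t0 ob0 a0) (Suc (Suc t)) s) = (\<Sum>a0\<in>A. \<delta> t0 ob0 a0) * nuR \<delta> (Suc (Suc t)) s"
        by (simp only: E[OF True] sum_distrib_right)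
      thus "nuR \<delta> (Suc (Suc t)) s = (\<Sum>a0\<in>A. \<delta> t0 ob0 a0 * nuR (upd \<delta> t0 ob0 a0) (Suc (Suc t)) s)"
        by (simp only: e W1 mult_1)
    next
      case False
      have "(\<Sum>a0\<in>A. \<delta> t0 ob0 a0 * nuR (upd \<delta> t0 ob0 a0) (Suc (Suc t)) s) =
         (\<Sum>s''\<in>S. \<Sum>a''\<in>A. \<Sum>a0\<in>A. \<delta> t0 ob0 a0 * (pt s'' a'' s * (\<Sum>ob\<in>Ob. upd \<delta> t0 ob0 a0 (Suc t) ob a'' * pe s'' ob * nuR (upd \<delta> t0 ob0 a0) (Suc t) s'')))"
        (is "?L = ?R")
      proof -
        have "?L = (\<Sum>a0\<in>A. \<delta> t0 ob0 a0 * (\<Sum>s''\<in>S. \<Sum>a''\<in>A. pt s'' a'' s * (\<Sum>ob\<in>Ob. upd \<delta> t0 ob0 a0 (Suc t) ob a'' * pe s'' ob * nuR (upd \<delta> t0 ob0 a0) (Suc t) s'')))"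
          by (simp only: nuR.simps)
        also have "\<dots> = (\<Sum>s''\<in>S. \<Sum>a0\<in>A. \<delta> t0 ob0 a0 * (\<Sum>a''\<in>A. pt s'' a'' s * (\<Sum>ob\<in>Ob. upd \<delta> t0 ob0 a0 (Suc t) ob a'' * pe s'' ob * nuR (upd \<delta> t0 ob0 a0) (Suc t) s'')))"
          by (rule swap_lin[OF fin(3)])
        also have "\<dots> = ?R"
          by (intro sum.cong refl swap_lin[OF fin(3)])
        finally show ?thesis .
      qed
      also have "\<dots> = (\<Sum>s''\<in>S. \<Sum>a''\<in>A. pt s'' a'' s * (\<Sum>ob\<in>Ob. \<delta> (Suc t) ob a'' * pe s'' ob * nuR \<delta> (Suc t) s''))"
      proof (intro sum.cong refl)
        fix s'' a'' assume s'': "s'' \<in> S" and a'': "a'' \<in> A"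
        have "(\<Sum>a0\<in>A. \<delta> t0 ob0 a0 * (pt s'' a'' s * (\<Sum>ob\<in>Ob. upd \<delta> t0 ob0 a0 (Suc t) ob a'' * pe s'' ob * nuR (upd \<delta> t0 ob0 a0) (Suc t) s'')))
          = pt s'' a'' s * (\<Sum>ob\<in>Ob. \<Sum>a0\<in>A. \<delta> t0 ob0 a0 * (upd \<delta> t0 ob0 a0 (Suc t) ob a'' * pe s'' ob * nuR (upd \<delta> t0 ob0 a0) (Suc t) s''))"
          by (simp add: swap_lin[OF fin(3), symmetric] sum_distrib_left mult.left_commute)
        also have "(\<Sum>ob\<in>Ob. \<Sum>a0\<in>A. \<delta> t0 ob0 a0 * (upd \<delta> t0 ob0 a0 (Suc t) ob a'' * pe s'' ob * nuR (upd \<delta> t0 ob0 a0) (Suc t) s''))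
          = (\<Sum>ob\<in>Ob. \<delta> (Suc t) ob a'' * pe s'' ob * nuR \<delta> (Suc t) s'')"
        proof (intro sum.cong refl)
          fix ob assume ob: "ob \<in> Ob"
          show "(\<Sum>a0\<in>A. \<delta> t0 ob0 a0 * (upd \<delta> t0 ob0 a0 (Suc t) ob a'' * pe s'' ob * nuR (upd \<delta> t0 ob0 a0) (Suc t) s''))
              = \<delta> (Suc t) ob a'' * pe s'' ob * nuR \<delta> (Suc t) s''"
          proof (cases "Suc t = t0")
            case True
            have "(\<Sum>a0\<in>A. \<delta> t0 ob0 a0 * (upd \<delta> t0 ob0 a0 (Suc t) ob a'' * pe s'' ob * nuR (upd \<delta> t0 ob0 a0) (Suc t) s''))
               = (\<Sum>a0\<in>A. \<delta> t0 ob0 a0 * upd \<delta> t0 ob0 a0 t0 ob a'') * (pe s'' ob * nuR \<delta> (Suc t) s'')"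
              using True E[of "Suc t"] by (simp add: sum_distrib_right mult.assoc)
            thus ?thesis using M[OF st t0 ob0 ob a''] True by simp
          next
            case False
            hence "upd \<delta> t0 ob0 a0 (Suc t) = \<delta> (Suc t)" for a0 by (simp add: upd_def)
            thus ?thesis using IH by (simp add: sum_distrib_left sum_distrib_right mult.commute mult.left_commute)
          qed
        qed
        finally show "(\<Sum>a0\<in>A. \<delta> t0 ob0 a0 * (pt s'' a'' s * (\<Sum>ob\<in>Ob. upd \<delta> t0 ob0 a0 (Suc t) ob a'' * pe s'' ob * nuR (upd \<delta> t0 ob0 a0) (Suc t) s'')))
           = pt s'' a'' s * (\<Sum>ob\<in>Ob. \<delta> (Suc t) ob a'' * pe s'' ob * nuR \<delta> (Suc t) s'')" .
      qed
      also have "\<dots> = nuR \<delta> (Suc (Suc t)) s" by simp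
      finally show "nuR \<delta> (Suc (Suc t)) s = (\<Sum>a0\<in>A. \<delta> t0 ob0 a0 * nuR (upd \<delta> t0 ob0 a0) (Suc (Suc t)) s)" by simp
    qed
  qed
qed

lemma nuR_upd_le: "t \<le> t0 \<Longrightarrow> nuR (upd \<delta> t0 ob0 a0) t s = nuR \<delta> t s"
  by (rule nuR_E) (auto simp: upd_def)

lemma tsoa_lin:
  assumes st: "stoch T \<delta>" and t0: "t0 \<in> {1..T}" and ob0: "ob0 \<in> Ob" and ob: "ob \<in> Ob" and a: "a \<in> A"
  shows "tsoaR \<delta> t s ob a = (\<Sum>a0\<in>A. \<delta> t0 ob0 a0 * tsoaR (upd \<delta> t0 ob0 a0) t s ob a)"
proof (cases "t = t0")
  case True
  have "(\<Sum>a0\<in>A. \<delta> t0 ob0 a0 * tsoaR (upd \<delta> t0 ob0 a0) t s ob a)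
     = (\<Sum>a0\<in>A. \<delta> t0 ob0 a0 * upd \<delta> t0 ob0 a0 t0 ob a) * (pe s ob * nuR \<delta> t0 s)"
    unfolding tsoaR_def True nuR_upd_le[OF order_refl] by (simp add: sum_distrib_right mult.assoc)
  thus ?thesis using M[OF st t0 ob0 ob a] True by (simp add: tsoaR_def mult.assoc)
next
  case False
  hence u: "upd \<delta> t0 ob0 a0 t = \<delta> t" for a0 by (simp add: upd_def)
  have "(\<Sum>a0\<in>A. \<delta> t0 ob0 a0 * tsoaR (upd \<delta> t0 ob0 a0) t s ob a)
     = \<delta> t ob a * pe s ob * (\<Sum>a0\<in>A. \<delta> t0 ob0 a0 * nuR (upd \<delta> t0 ob0 a0) t s)"
    unfolding tsoaR_def u by (simp add: sum_distrib_left mult.commute mult.left_commute)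
  thus ?thesis using N[OF st t0 ob0, of t s] by (simp add: tsoaR_def)
qed

definition Fg where
  "Fg T g \<delta> = (\<Sum>t\<in>{1..T}. \<Sum>s\<in>S. \<Sum>ob\<in>Ob. \<Sum>a\<in>A. tsoaR \<delta> t s ob a * g t s a)"

lemma Fg_lin:
  assumes st: "stoch T \<delta>" and t0: "t0 \<in> {1..T}" and ob0: "ob0 \<in> Ob"
  shows "Fg T g \<delta> = (\<Sum>a0\<in>A. \<delta> t0 ob0 a0 * Fg T g (upd \<delta> t0 ob0 a0))"
proof -
  have "(\<Sum>a0\<in>A. \<delta> t0 ob0 a0 * Fg T g (upd \<delta> t0 ob0 a0)) =
     (\<Sum>t\<in>{1..T}. \<Sum>s\<in>S. \<Sum>ob\<in>Ob. \<Sum>a\<in>A. \<Sum>a0\<in>A. \<delta> t0 ob0 a0 * (tsoaR (upd \<delta> t0 ob0 a0) t s ob a * g t s a))"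
    unfolding Fg_def by (simp only: swap_lin[OF fin(3)])
  also have "\<dots> = Fg T g \<delta>" unfolding Fg_def
    by (intro sum.cong refl) (simp add: tsoa_lin[OF st t0 ob0] sum_distrib_right mult.assoc)
  finally show ?thesis by simp
qed

lemma stoch_upd: "stoch T \<delta> \<Longrightarrow> a0 \<in> A \<Longrightarrow> stoch T (upd \<delta> t0 ob0 a0)"
  unfolding stoch_def upd_def using fin(3) by (auto simp: sum.delta)

lemma derand0:
  assumes "finite W"
  shows "W \<subseteq> {1..T} \<times> Ob \<Longrightarrow> stoch T \<delta> \<Longrightarrow> \<exists>\<delta>'. stoch T \<delta>' \<and> (\<forall>(t,ob)\<in>W. \<forall>a\<in>A. \<delta>' t ob a = 0 \<or> \<delta>' t ob a = 1)
      \<and> Fg T g \<delta> \<le> Fg T g \<delta>'"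
  using assms
proof (induction W arbitrary: \<delta> rule: finite_induct)
  case empty thus ?case by auto
next
  case (insert w W)
  obtain t0 ob0 where w: "w = (t0, ob0)" by (cases w)
  have t0: "t0 \<in> {1..T}" and ob0: "ob0 \<in> Ob" using insert.prems w by auto
  obtain \<delta>1 where d1: "stoch T \<delta>1" "\<forall>(t,ob)\<in>W. \<forall>a\<in>A. \<delta>1 t ob a = 0 \<or> \<delta>1 t ob a = 1" "Fg T g \<delta> \<le> Fg T g \<delta>1"
    using insert.IH[of \<delta>] insert.prems by auto
  define f where "f a0 = Fg T g (upd \<delta>1 t0 ob0 a0)" for a0
  have Ane: "A \<noteq> {}" using P by (auto simp: pomdp_def)
  define m where "m = Max (f ` A)"
  have "m \<in> f ` A" unfolding m_def by (rule Max_in) (use fin(3) Ane in auto)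
  then obtain a0 where a0: "a0 \<in> A" "f a0 = m" by auto
  have fle: "f a \<le> m" if "a \<in> A" for a unfolding m_def using fin(3) that by auto
  have "Fg T g \<delta>1 = (\<Sum>a\<in>A. \<delta>1 t0 ob0 a * f a)" unfolding f_def by (rule Fg_lin[OF d1(1) t0 ob0])
  also have "\<dots> \<le> (\<Sum>a\<in>A. \<delta>1 t0 ob0 a * m)"
    by (rule sum_mono, rule mult_left_mono) (use fle d1(1) t0 ob0 in \<open>auto simp: stoch_def\<close>)
  also have "\<dots> = m" using d1(1) t0 ob0 by (simp add: sum_distrib_right[symmetric] stoch_def)
  finally have "Fg T g \<delta>1 \<le> f a0" using a0 by simp
  show ?case
  proof (intro exI conjI)
    show "stoch T (upd \<delta>1 t0 ob0 a0)" by (rule stoch_upd[OF d1(1) a0(1)])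
    show "\<forall>(t, ob)\<in>insert w W. \<forall>a\<in>A. upd \<delta>1 t0 ob0 a0 t ob a = 0 \<or> upd \<delta>1 t0 ob0 a0 t ob a = 1"
      using d1(2) w by (fastforce simp: upd_def)
    show "Fg T g \<delta> \<le> Fg T g (upd \<delta>1 t0 ob0 a0)" using d1(3) \<open>Fg T g \<delta>1 \<le> f a0\<close> f_def by simp
  qed
qed

lemma derand:
  assumes "stoch T \<delta>"
  shows "\<exists>\<delta>'. stoch T \<delta>' \<and> (\<forall>t\<in>{1..T}. \<forall>ob\<in>Ob. \<forall>a\<in>A. \<delta>' t ob a = 0 \<or> \<delta>' t ob a = 1)
      \<and> Fg T g \<delta> \<le> Fg T g \<delta>'"
  using derand0[of "{1..T} \<times> Ob" T \<delta> g] assms fin by auto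

lemma nuR_cong: "(\<forall>t'\<in>{1..<t}. \<forall>ob\<in>Ob. \<forall>a\<in>A. \<delta> t' ob a = \<delta>' t' ob a) \<Longrightarrow> nuR \<delta> t s = nuR \<delta>' t s"
proof (induction t arbitrary: s rule: less_induct)
  case (less t)
  show ?case
  proof (cases t rule: nat3)
    case (3 n)
    have "nuR \<delta> (Suc n) s'' = nuR \<delta>' (Suc n) s''" for s'' using less 3 by auto
    moreover have "\<delta> (Suc n) ob a = \<delta>' (Suc n) ob a" if "ob \<in> Ob" "a \<in> A" for ob a using less 3 that by auto
    ultimately show ?thesis using 3 by simp
  qed auto
qed

lemma tsoaR_cong: "(\<forall>t'\<in>{1..T}. \<forall>ob\<in>Ob. \<forall>a\<in>A. \<delta> t' ob a = \<delta>' t' ob a) \<Longrightarrow> t \<in> {1..T} \<Longrightarrow> ob \<in> Ob \<Longrightarrow> a \<in> A \<Longrightarrow>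
  tsoaR \<delta> t s ob a = tsoaR \<delta>' t s ob a"
  unfolding tsoaR_def using nuR_cong[of t \<delta> \<delta>' s] by auto

lemma Fg_cong: "(\<forall>t'\<in>{1..T}. \<forall>ob\<in>Ob. \<forall>a\<in>A. \<delta> t' ob a = \<delta>' t' ob a) \<Longrightarrow> Fg T g \<delta> = Fg T g \<delta>'"
  unfolding Fg_def using tsoaR_cong[of T \<delta> \<delta>'] by (intro sum.cong refl) auto

lemma Qb_mass: assumes Qb: "Q_base T S Ob A p0 pt tsoa tsas dl"
  shows "t \<in> {1..T} \<Longrightarrow> (\<Sum>s\<in>S. nu S A p0 tsas t s) = 1"
proof (induction t)
  case 0 thus ?case by simp
next
  case (Suc t)
  show ?case
  proof (cases "t = 0")
    case True thus ?thesis using p0_sum by (simp add: nu_def)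
  next
    case False
    hence t: "t \<in> {1..T}" using Suc by auto
    have "(\<Sum>s'\<in>S. nu S A p0 tsas (Suc t) s') = (\<Sum>s'\<in>S. \<Sum>s\<in>S. \<Sum>a\<in>A. tsas t s a s')"
      using False by (simp add: nu_def)
    also have "\<dots> = (\<Sum>s\<in>S. \<Sum>s'\<in>S. \<Sum>a\<in>A. tsas t s a s')" by (rule sum.swap)
    also have "\<dots> = (\<Sum>s\<in>S. \<Sum>a\<in>A. \<Sum>s'\<in>S. tsas t s a s')" by (intro sum.cong refl sum.swap)
    also have "\<dots> = (\<Sum>s\<in>S. \<Sum>a\<in>A. \<Sum>ob\<in>Ob. tsoa t s ob a)"
      using Qb t unfolding Q_base_def by (intro sum.cong refl) blast
    also have "\<dots> = (\<Sum>s\<in>S. \<Sum>ob\<in>Ob. \<Sum>a\<in>A. tsoa t s ob a)" by (intro sum.cong refl sum.swap)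
    also have "\<dots> = (\<Sum>s\<in>S. nu S A p0 tsas t s)"
      using Qb t unfolding Q_base_def by (intro sum.cong refl) blast
    finally show ?thesis using Suc t by simp
  qed
qed

lemma Qb_tsas_le1: assumes Qb: "Q_base T S Ob A p0 pt tsoa tsas dl"
  and t: "t \<in> {1..T}" and s: "s \<in> S" and a: "a \<in> A" and s': "s' \<in> S"
  shows "tsas t s a s' \<le> 1"
proof -
  have nn: "\<forall>s\<in>S. \<forall>a\<in>A. \<forall>s'\<in>S. tsas t s a s' \<ge> 0" using Qb t unfolding Q_base_def by blast
  have "tsas t s a s' \<le> (\<Sum>s'\<in>S. tsas t s a s')" by (rule member_le_sum) (use nn s a s' fin in auto)
  also have "\<dots> \<le> (\<Sum>a\<in>A. \<Sum>s'\<in>S. tsas t s a s')"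
    by (rule member_le_sum[of a A "\<lambda>a. \<Sum>s'\<in>S. tsas t s a s'"]) (use nn s a fin in \<open>auto intro: sum_nonneg\<close>)
  also have "\<dots> \<le> (\<Sum>s\<in>S. \<Sum>a\<in>A. \<Sum>s'\<in>S. tsas t s a s')"
    by (rule member_le_sum[of s S "\<lambda>s. \<Sum>a\<in>A. \<Sum>s'\<in>S. tsas t s a s'"]) (use nn s fin in \<open>auto intro!: sum_nonneg\<close>)
  also have "\<dots> = (\<Sum>s\<in>S. \<Sum>a\<in>A. \<Sum>ob\<in>Ob. tsoa t s ob a)"
    using Qb t unfolding Q_base_def by (intro sum.cong refl) blast
  also have "\<dots> = (\<Sum>s\<in>S. \<Sum>ob\<in>Ob. \<Sum>a\<in>A. tsoa t s ob a)" by (intro sum.cong refl sum.swap)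
  also have "\<dots> = (\<Sum>s\<in>S. nu S A p0 tsas t s)"
    using Qb t unfolding Q_base_def by (intro sum.cong refl) blast
  also have "\<dots> = 1" using Qb_mass[OF Qb t] .
  finally show ?thesis .
qed

end



lemma swap4: "(\<Sum>k\<in>K. \<Sum>a\<in>A. \<Sum>s\<in>S. \<Sum>ob\<in>Obs. f k a s ob) = (\<Sum>s\<in>S. \<Sum>ob\<in>Obs. \<Sum>a\<in>A. \<Sum>k\<in>K. (f k a s ob::real))"
proof -
  have "(\<Sum>k\<in>K. \<Sum>a\<in>A. \<Sum>s\<in>S. \<Sum>ob\<in>Obs. f k a s ob) = (\<Sum>a\<in>A. \<Sum>k\<in>K. \<Sum>s\<in>S. \<Sum>ob\<in>Obs. f k a s ob)"
    by (rule sum.swap)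
  also have "\<dots> = (\<Sum>a\<in>A. \<Sum>s\<in>S. \<Sum>k\<in>K. \<Sum>ob\<in>Obs. f k a s ob)" by (intro sum.cong refl sum.swap)
  also have "\<dots> = (\<Sum>a\<in>A. \<Sum>s\<in>S. \<Sum>ob\<in>Obs. \<Sum>k\<in>K. f k a s ob)" by (intro sum.cong refl sum.swap)
  also have "\<dots> = (\<Sum>s\<in>S. \<Sum>a\<in>A. \<Sum>ob\<in>Obs. \<Sum>k\<in>K. f k a s ob)" by (rule sum.swap)
  also have "\<dots> = (\<Sum>s\<in>S. \<Sum>ob\<in>Obs. \<Sum>a\<in>A. \<Sum>k\<in>K. f k a s ob)" by (intro sum.cong refl sum.swap)
  finally show ?thesis .
qed

lemma mult_sum_lin: "(c::real) * (\<Sum>p\<in>P. l p * f p) = (\<Sum>p\<in>P. l p * (c * f p))"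
  by (simp add: sum_distrib_left mult.left_commute)

locale glob =
  fixes T M :: nat
    and S :: "nat \<Rightarrow> 's set" and Ob :: "nat \<Rightarrow> 'ob set" and A :: "nat \<Rightarrow> 'a set"
    and p0 :: "nat \<Rightarrow> 's \<Rightarrow> real" and pe :: "nat \<Rightarrow> 's \<Rightarrow> 'ob \<Rightarrow> real"
    and pt :: "nat \<Rightarrow> 's \<Rightarrow> 'a \<Rightarrow> 's \<Rightarrow> real" and r :: "nat \<Rightarrow> 's \<Rightarrow> 'a \<Rightarrow> 's \<Rightarrow> real"
    and D :: "nat \<Rightarrow> 'a \<Rightarrow> 'k::finite \<Rightarrow> real" and b :: "'k \<Rightarrow> real"
  assumes WC: "weakly_coupled_pomdp M S Ob A p0 pe pt D b"
begin

lemma CP: "m \<in> {1..M} \<Longrightarrow> compp (S m) (Ob m) (A m) (p0 m) (pe m) (pt m)"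
  using WC by (simp add: compp_def weakly_coupled_pomdp_def)

definition g where "g \<beta> m t s a = (\<Sum>s'\<in>S m. r m s a s' * pt m s a s') - (\<Sum>k\<in>UNIV. \<beta> t k * D m a k)"
definition K where "K \<beta> = (\<Sum>t\<in>{1..T}. \<Sum>k\<in>UNIV. \<beta> t k * b k)"

lemma LAG:
  assumes Qb: "\<forall>m\<in>{1..M}. Q_base T (S m) (Ob m) (A m) (p0 m) (pt m) (tsoa m) (tsas m) (dl m)"
  shows "lagr_objective T M S Ob A r D b \<beta> tsoa tsas = K \<beta> +
     (\<Sum>m\<in>{1..M}. \<Sum>t\<in>{1..T}. \<Sum>s\<in>S m. \<Sum>ob\<in>Ob m. \<Sum>a\<in>A m. tsoa m t s ob a * g \<beta> m t s a)"
proof -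
  define R where "R m s a = (\<Sum>s'\<in>S m. r m s a s' * pt m s a s')" for m s a
  define Bd where "Bd t m a = (\<Sum>k\<in>UNIV. \<beta> t k * D m a k)" for t m a
  have O1: "(\<Sum>s\<in>S m. \<Sum>a\<in>A m. \<Sum>s'\<in>S m. r m s a s' * tsas m t s a s') = (\<Sum>s\<in>S m. \<Sum>ob\<in>Ob m. \<Sum>a\<in>A m. tsoa m t s ob a * R m s a)"
    if m: "m \<in> {1..M}" and t: "t \<in> {1..T}" for m t
  proof -
    have "(\<Sum>s'\<in>S m. r m s a s' * tsas m t s a s') = (\<Sum>ob\<in>Ob m. tsoa m t s ob a * R m s a)"
      if s: "s \<in> S m" and a: "a \<in> A m" for s a
    proof -
      have iv: "\<And>s'. s' \<in> S m \<Longrightarrow> tsas m t s a s' = pt m s a s' * (\<Sum>sb\<in>S m. tsas m t s a sb)"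
        and iii: "(\<Sum>sb\<in>S m. tsas m t s a sb) = (\<Sum>ob\<in>Ob m. tsoa m t s ob a)"
        using Qb m t s a unfolding Q_base_def by blast+
      have "(\<Sum>s'\<in>S m. r m s a s' * tsas m t s a s') = (\<Sum>s'\<in>S m. r m s a s' * pt m s a s') * (\<Sum>ob\<in>Ob m. tsoa m t s ob a)"
        unfolding sum_distrib_right using iv iii by (intro sum.cong refl) (simp add: mult.assoc)
      thus ?thesis by (simp add: R_def sum_distrib_right mult.commute)
    qed
    hence "(\<Sum>s\<in>S m. \<Sum>a\<in>A m. \<Sum>s'\<in>S m. r m s a s' * tsas m t s a s') = (\<Sum>s\<in>S m. \<Sum>a\<in>A m. \<Sum>ob\<in>Ob m. tsoa m t s ob a * R m s a)"
      by (intro sum.cong refl) auto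
    also have "\<dots> = (\<Sum>s\<in>S m. \<Sum>ob\<in>Ob m. \<Sum>a\<in>A m. tsoa m t s ob a * R m s a)" by (intro sum.cong refl sum.swap)
    finally show ?thesis .
  qed
  have U1: "(\<Sum>k\<in>UNIV. \<beta> t k * (\<Sum>a\<in>A m. D m a k * tau_a S Ob tsoa m t a)) = (\<Sum>s\<in>S m. \<Sum>ob\<in>Ob m. \<Sum>a\<in>A m. tsoa m t s ob a * Bd t m a)"
    for m t
  proof -
    have "(\<Sum>k\<in>UNIV. \<beta> t k * (\<Sum>a\<in>A m. D m a k * tau_a S Ob tsoa m t a)) = (\<Sum>k\<in>UNIV. \<Sum>a\<in>A m. \<Sum>s\<in>S m. \<Sum>ob\<in>Ob m. \<beta> t k * D m a k * tsoa m t s ob a)"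
      by (simp add: tau_a_def sum_distrib_left mult.assoc)
    also have "\<dots> = (\<Sum>s\<in>S m. \<Sum>ob\<in>Ob m. \<Sum>a\<in>A m. \<Sum>k\<in>UNIV. \<beta> t k * D m a k * tsoa m t s ob a)" by (rule swap4)
    also have "\<dots> = (\<Sum>s\<in>S m. \<Sum>ob\<in>Ob m. \<Sum>a\<in>A m. tsoa m t s ob a * Bd t m a)"
      by (simp add: Bd_def sum_distrib_left sum_distrib_right mult.commute)
    finally show ?thesis .
  qed
  have "lagr_objective T M S Ob A r D b \<beta> tsoa tsas =
      (\<Sum>t\<in>{1..T}. \<Sum>m\<in>{1..M}. \<Sum>s\<in>S m. \<Sum>ob\<in>Ob m. \<Sum>a\<in>A m. tsoa m t s ob a * R m s a)
      + (\<Sum>t\<in>{1..T}. (\<Sum>k\<in>UNIV. \<beta> t k * b k) - (\<Sum>m\<in>{1..M}. \<Sum>s\<in>S m. \<Sum>ob\<in>Ob m. \<Sum>a\<in>A m. tsoa m t s ob a * Bd t m a))"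
  proof -
    have a1: "objective T M S A r tsas = (\<Sum>t\<in>{1..T}. \<Sum>m\<in>{1..M}. \<Sum>s\<in>S m. \<Sum>ob\<in>Ob m. \<Sum>a\<in>A m. tsoa m t s ob a * R m s a)"
      unfolding objective_def by (rule sum.cong[OF refl], rule sum.cong[OF refl]) (use O1 in auto)
    have a2: "(\<Sum>k\<in>UNIV. \<beta> t k * (b k - usage M S Ob A D tsoa t k)) =
       (\<Sum>k\<in>UNIV. \<beta> t k * b k) - (\<Sum>m\<in>{1..M}. \<Sum>s\<in>S m. \<Sum>ob\<in>Ob m. \<Sum>a\<in>A m. tsoa m t s ob a * Bd t m a)" for t
    proof -
      have "(\<Sum>k\<in>UNIV. \<beta> t k * usage M S Ob A D tsoa t k) = (\<Sum>m\<in>{1..M}. \<Sum>k\<in>UNIV. \<beta> t k * (\<Sum>a\<in>A m. D m a k * tau_a S Ob tsoa m t a))"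
        unfolding usage_def sum_distrib_left by (rule sum.swap)
      also have "\<dots> = (\<Sum>m\<in>{1..M}. \<Sum>s\<in>S m. \<Sum>ob\<in>Ob m. \<Sum>a\<in>A m. tsoa m t s ob a * Bd t m a)"
        using U1 by simp
      finally show ?thesis by (simp add: right_diff_distrib sum_subtractf)
    qed
    show ?thesis unfolding lagr_objective_def a1 a2 ..
  qed
  also have "\<dots> = K \<beta> + (\<Sum>t\<in>{1..T}. \<Sum>m\<in>{1..M}. \<Sum>s\<in>S m. \<Sum>ob\<in>Ob m. \<Sum>a\<in>A m. tsoa m t s ob a * g \<beta> m t s a)"
  proof -
    have gR: "g \<beta> m t s a = R m s a - Bd t m a" for m t s a by (simp add: g_def R_def Bd_def)
    show ?thesis unfolding gR by (simp add: K_def sum.distrib sum_subtractf right_diff_distrib)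
  qed
  also have "(\<Sum>t\<in>{1..T}. \<Sum>m\<in>{1..M}. \<Sum>s\<in>S m. \<Sum>ob\<in>Ob m. \<Sum>a\<in>A m. tsoa m t s ob a * g \<beta> m t s a)
     = (\<Sum>m\<in>{1..M}. \<Sum>t\<in>{1..T}. \<Sum>s\<in>S m. \<Sum>ob\<in>Ob m. \<Sum>a\<in>A m. tsoa m t s ob a * g \<beta> m t s a)"
    by (rule sum.swap)
  finally show ?thesis .
qed

abbreviation "TOR m \<equiv> comp.tsoaR (S m) (Ob m) (A m) (p0 m) (pe m) (pt m)"
abbreviation "TSR m \<equiv> comp.tsasR (S m) (Ob m) (A m) (p0 m) (pe m) (pt m)"
abbreviation "FG m \<equiv> compp.Fg (S m) (Ob m) (A m) (p0 m) (pe m) (pt m) T"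
abbreviation "STOCH m \<equiv> comp.stoch (Ob m) (A m) T"

definition Dom where "Dom = {(m,t,ob). m \<in> {1..M} \<and> t \<in> {1..T} \<and> ob \<in> Ob m}"
definition Pol where "Pol = PiE Dom (\<lambda>(m,t,ob). A m)"
definition dpol where "dpol \<pi> m t ob a = (if \<pi> (m,t,ob) = a then 1 else (0::real))"
definition val where "val \<beta> \<pi> = lagr_objective T M S Ob A r D b \<beta> (\<lambda>m. TOR m (dpol \<pi> m)) (\<lambda>m. TSR m (dpol \<pi> m))"
definition G where "G \<beta> = Max (val \<beta> ` Pol)"

definition SQ where "SQ \<beta> = {lagr_objective T M S Ob A r D b \<beta> tsoa tsas | tsoa tsas dl.
          (\<forall>m\<in>{1..M}. inQ T (S m) (Ob m) (A m) (p0 m) (pe m) (pt m) (tsoa m) (tsas m) (dl m))}"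
definition SQd where "SQd \<beta> = {lagr_objective T M S Ob A r D b \<beta> tsoa tsas | tsoa tsas dl.
          (\<forall>m\<in>{1..M}. inQd T (S m) (Ob m) (A m) (p0 m) (pe m) (pt m) (tsoa m) (tsas m) (dl m))}"

lemma fin_Dom: "finite Dom"
proof -
  have "Dom \<subseteq> Sigma {1..M} (\<lambda>m. {1..T} \<times> Ob m)" unfolding Dom_def by auto
  moreover have "finite (Sigma {1..M} (\<lambda>m. {1..T} \<times> Ob m))"
    using compp.fin[OF CP] by (intro finite_SigmaI) auto
  ultimately show ?thesis by (rule finite_subset)
qed

lemma fin_Pol: "finite Pol"
  unfolding Pol_def using fin_Dom compp.fin[OF CP] by (intro finite_PiE) (auto simp: Dom_def)

lemma A_ne: "m \<in> {1..M} \<Longrightarrow> A m \<noteq> {}"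
  using CP[of m] by (auto simp: compp_def pomdp_def)

lemma Pol_ne: "Pol \<noteq> {}"
  unfolding Pol_def using A_ne by (auto simp: PiE_eq_empty_iff Dom_def)

lemma stoch_dpol: "\<pi> \<in> Pol \<Longrightarrow> m \<in> {1..M} \<Longrightarrow> STOCH m (dpol \<pi> m)"
proof -
  assume p: "\<pi> \<in> Pol" and m: "m \<in> {1..M}"
  have "\<pi> (m,t,ob) \<in> A m" if "t \<in> {1..T}" "ob \<in> Ob m" for t ob
    using p m that unfolding Pol_def Dom_def by auto
  thus ?thesis unfolding comp.stoch_def dpol_def using compp.fin[OF CP[OF m]]
    by (auto simp: sum.delta[of "A m"] eq_commute[of "\<pi> _"])
qed

lemma det_dpol: "\<forall>t\<in>{1..T}. \<forall>ob\<in>Ob m. \<forall>a\<in>A m. dpol \<pi> m t ob a = 0 \<or> dpol \<pi> m t ob a = 1"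
  by (auto simp: dpol_def)

lemma Qb_pol: "\<pi> \<in> Pol \<Longrightarrow> \<forall>m\<in>{1..M}. Q_base T (S m) (Ob m) (A m) (p0 m) (pt m) (TOR m (dpol \<pi> m)) (TSR m (dpol \<pi> m)) (dpol \<pi> m)"
  using compp.Qb_R[OF CP] stoch_dpol by blast

lemma val_LAG: "\<pi> \<in> Pol \<Longrightarrow> val \<beta> \<pi> = K \<beta> + (\<Sum>m\<in>{1..M}. FG m (g \<beta> m) (dpol \<pi> m))"
  unfolding val_def by (subst LAG[OF Qb_pol]) (auto simp: compp.Fg_def[OF CP] intro!: sum.cong)

lemma val_SQ: "\<pi> \<in> Pol \<Longrightarrow> val \<beta> \<pi> \<in> SQ \<beta>"
  unfolding SQ_def val_def using compp.inQ_R[OF CP] stoch_dpol by blast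

lemma val_SQd: "\<pi> \<in> Pol \<Longrightarrow> val \<beta> \<pi> \<in> SQd \<beta>"
  unfolding SQd_def val_def using compp.inQd_R[OF CP] stoch_dpol det_dpol by blast

lemma SQd_SQ: "SQd \<beta> \<subseteq> SQ \<beta>"
  unfolding SQd_def SQ_def using compp.inQd_inQ[OF CP] by blast

lemma G_in: "\<exists>\<pi>\<in>Pol. G \<beta> = val \<beta> \<pi>"
proof -
  have "G \<beta> \<in> val \<beta> ` Pol" unfolding G_def by (rule Max_in) (use fin_Pol Pol_ne in auto)
  thus ?thesis by auto
qed

lemma G_ge: "\<pi> \<in> Pol \<Longrightarrow> val \<beta> \<pi> \<le> G \<beta>"
  unfolding G_def using fin_Pol by auto

lemma upper:
  assumes Q: "\<forall>m\<in>{1..M}. inQ T (S m) (Ob m) (A m) (p0 m) (pe m) (pt m) (tsoa m) (tsas m) (dl m)"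
  shows "lagr_objective T M S Ob A r D b \<beta> tsoa tsas \<le> G \<beta>"
proof -
  have Qb: "\<forall>m\<in>{1..M}. Q_base T (S m) (Ob m) (A m) (p0 m) (pt m) (tsoa m) (tsas m) (dl m)"
    using Q unfolding inQ_def by blast
  have L: "lagr_objective T M S Ob A r D b \<beta> tsoa tsas = K \<beta> + (\<Sum>m\<in>{1..M}. FG m (g \<beta> m) (dl m))"
  proof -
    have "(\<Sum>t\<in>{1..T}. \<Sum>s\<in>S m. \<Sum>ob\<in>Ob m. \<Sum>a\<in>A m. tsoa m t s ob a * g \<beta> m t s a) = FG m (g \<beta> m) (dl m)"
      if m: "m \<in> {1..M}" for m
    proof -
      have "tsoa m t s ob a = TOR m (dl m) t s ob a" if "t \<in> {1..T}" "s \<in> S m" "ob \<in> Ob m" "a \<in> A m" for t s ob a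
        using compp.uniq(1)[OF CP[OF m] _ compp.inQ_v[OF CP[OF m]] that(1,2)] Q m that unfolding inQ_def by blast
      thus ?thesis unfolding compp.Fg_def[OF CP[OF m]] by (intro sum.cong refl) auto
    qed
    thus ?thesis by (subst LAG[OF Qb]) simp
  qed
  have "\<forall>m\<in>{1..M}. \<exists>\<delta>'. STOCH m \<delta>' \<and> (\<forall>t\<in>{1..T}. \<forall>ob\<in>Ob m. \<forall>a\<in>A m. \<delta>' t ob a = 0 \<or> \<delta>' t ob a = 1)
      \<and> FG m (g \<beta> m) (dl m) \<le> FG m (g \<beta> m) \<delta>'"
  proof
    fix m assume m: "m \<in> {1..M}"
    have "STOCH m (dl m)" using compp.Qb_stoch[OF CP[OF m]] Qb m by blast
    thus "\<exists>\<delta>'. STOCH m \<delta>' \<and> (\<forall>t\<in>{1..T}. \<forall>ob\<in>Ob m. \<forall>a\<in>A m. \<delta>' t ob a = 0 \<or> \<delta>' t ob a = 1)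
      \<and> FG m (g \<beta> m) (dl m) \<le> FG m (g \<beta> m) \<delta>'" by (rule compp.derand[OF CP[OF m]])
  qed
  then obtain f where f: "\<forall>m\<in>{1..M}. STOCH m (f m) \<and> (\<forall>t\<in>{1..T}. \<forall>ob\<in>Ob m. \<forall>a\<in>A m. f m t ob a = 0 \<or> f m t ob a = 1)
      \<and> FG m (g \<beta> m) (dl m) \<le> FG m (g \<beta> m) (f m)" by metis
  define \<pi> where "\<pi> = (\<lambda>(m,t,ob). if (m,t,ob) \<in> Dom then (SOME a. a \<in> A m \<and> f m t ob a = 1) else undefined)"
  have ex1: "\<exists>a. a \<in> A m \<and> f m t ob a = 1" if "m \<in> {1..M}" "t \<in> {1..T}" "ob \<in> Ob m" for m t ob
  proof (rule ccontr)
    assume "\<not> ?thesis"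
    hence "\<forall>a\<in>A m. f m t ob a = 0" using f that by blast
    hence "(\<Sum>a\<in>A m. f m t ob a) = 0" by simp
    moreover have "(\<Sum>a\<in>A m. f m t ob a) = 1" using f that unfolding comp.stoch_def by blast
    ultimately show False by simp
  qed
  have pi_ok: "\<pi> (m,t,ob) \<in> A m \<and> f m t ob (\<pi> (m,t,ob)) = 1" if "m \<in> {1..M}" "t \<in> {1..T}" "ob \<in> Ob m" for m t ob
    using someI_ex[OF ex1[OF that]] that unfolding \<pi>_def Dom_def by auto
  have piP: "\<pi> \<in> Pol" unfolding Pol_def
    using pi_ok by (auto simp: PiE_def Pi_def extensional_def Dom_def \<pi>_def)
  have dp: "dpol \<pi> m t ob a = f m t ob a" if "m \<in> {1..M}" "t \<in> {1..T}" "ob \<in> Ob m" "a \<in> A m" for m t ob a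
  proof (cases "\<pi> (m,t,ob) = a")
    case True thus ?thesis using pi_ok[OF that(1-3)] by (simp add: dpol_def)
  next
    case False
    let ?a = "\<pi> (m,t,ob)"
    have st: "(\<Sum>a\<in>A m. f m t ob a) = 1" "\<forall>a\<in>A m. f m t ob a \<ge> 0" using f that unfolding comp.stoch_def by blast+
    have fin: "finite (A m)" using compp.fin[OF CP[OF that(1)]] by simp
    have "f m t ob ?a + f m t ob a = (\<Sum>a'\<in>{?a, a}. f m t ob a')" using False by simp
    also have "\<dots> \<le> (\<Sum>a\<in>A m. f m t ob a)"
      by (rule sum_mono2) (use fin pi_ok[OF that(1-3)] that st in auto)
    finally have "f m t ob a \<le> 0" using st pi_ok[OF that(1-3)] by simp
    hence "f m t ob a = 0" using st that by force
    thus ?thesis using False by (simp add: dpol_def)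
  qed
  have "FG m (g \<beta> m) (dl m) \<le> FG m (g \<beta> m) (dpol \<pi> m)" if m: "m \<in> {1..M}" for m
  proof -
    have "FG m (g \<beta> m) (f m) = FG m (g \<beta> m) (dpol \<pi> m)"
      by (rule compp.Fg_cong[OF CP[OF m]]) (use dp m in auto)
    moreover have "FG m (g \<beta> m) (dl m) \<le> FG m (g \<beta> m) (f m)" using f m by blast
    ultimately show ?thesis by simp
  qed
  hence "lagr_objective T M S Ob A r D b \<beta> tsoa tsas \<le> val \<beta> \<pi>"
    unfolding L val_LAG[OF piP] by (simp only: add_le_cancel_left) (rule sum_mono, simp)
  also have "\<dots> \<le> G \<beta>" by (rule G_ge[OF piP])
  finally show ?thesis .
qed

lemma Sup_SQ: "Sup (SQ \<beta>) = G \<beta>"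
proof -
  obtain \<pi> where p: "\<pi> \<in> Pol" "G \<beta> = val \<beta> \<pi>" using G_in by blast
  show ?thesis
  proof (rule cSup_eq_maximum)
    show "G \<beta> \<in> SQ \<beta>" using p val_SQ by simp
    show "x \<le> G \<beta>" if "x \<in> SQ \<beta>" for x using that upper unfolding SQ_def by blast
  qed
qed

lemma Sup_SQd: "Sup (SQd \<beta>) = G \<beta>"
proof -
  obtain \<pi> where p: "\<pi> \<in> Pol" "G \<beta> = val \<beta> \<pi>" using G_in by blast
  show ?thesis
  proof (rule cSup_eq_maximum)
    show "G \<beta> \<in> SQd \<beta>" using p val_SQd by simp
    show "x \<le> G \<beta>" if "x \<in> SQd \<beta>" for x using that upper SQd_SQ unfolding SQ_def by blast
  qed
qed

lemma usage_mix: "finite P \<Longrightarrow> usage M S Ob A D (\<lambda>m t s ob a. \<Sum>p\<in>P. l p * F p m t s ob a) t k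
    = (\<Sum>p\<in>P. l p * usage M S Ob A D (F p) t k)"
proof -
  assume fP: "finite P"
  have i1: "(\<Sum>s\<in>S m. \<Sum>ob\<in>Ob m. \<Sum>p\<in>P. l p * F p m t s ob a) = (\<Sum>p\<in>P. l p * (\<Sum>s\<in>S m. \<Sum>ob\<in>Ob m. F p m t s ob a))" for m a
    by (simp only: swap_lin'[OF fP])
  have "usage M S Ob A D (\<lambda>m t s ob a. \<Sum>p\<in>P. l p * F p m t s ob a) t k
     = (\<Sum>m\<in>{1..M}. \<Sum>a\<in>A m. \<Sum>p\<in>P. l p * (D m a k * (\<Sum>s\<in>S m. \<Sum>ob\<in>Ob m. F p m t s ob a)))"
    unfolding usage_def tau_a_def i1 by (simp only: mult_sum_lin)
  also have "\<dots> = (\<Sum>p\<in>P. l p * usage M S Ob A D (F p) t k)"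
    unfolding usage_def tau_a_def by (simp only: swap_lin'[OF fP])
  finally show ?thesis .
qed

lemma obj_mix: "finite P \<Longrightarrow> objective T M S A r (\<lambda>m t s a s'. \<Sum>p\<in>P. l p * H p m t s a s')
    = (\<Sum>p\<in>P. l p * objective T M S A r (H p))"
proof -
  assume fP: "finite P"
  have "objective T M S A r (\<lambda>m t s a s'. \<Sum>p\<in>P. l p * H p m t s a s')
     = (\<Sum>t\<in>{1..T}. \<Sum>m\<in>{1..M}. \<Sum>s\<in>S m. \<Sum>a\<in>A m. \<Sum>s'\<in>S m. \<Sum>p\<in>P. l p * (r m s a s' * H p m t s a s'))"
    unfolding objective_def by (simp only: mult_sum_lin)
  also have "\<dots> = (\<Sum>p\<in>P. l p * objective T M S A r (H p))"
    unfolding objective_def by (simp only: swap_lin'[OF fP])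
  finally show ?thesis .
qed

definition Bset where "Bset = {\<beta>. \<forall>t\<in>{1..T}. \<forall>k. \<beta> t k \<ge> (0::real)}"

definition SR where "SR = {objective T M S A r tsas | tsoa tsas dl.
          (\<forall>m\<in>{1..M}. inQd_relax T (S m) (Ob m) (A m) (p0 m) (pe m) (pt m) (tsoa m) (tsas m) (dl m)) \<and>
          linking T M S Ob A D b tsoa}"
definition SRc where "SRc = {objective T M S A r tsas | tsoa tsas dl x.
          (\<forall>m\<in>{1..M}. inQd_relax T (S m) (Ob m) (A m) (p0 m) (pe m) (pt m) (tsoa m) (tsas m) (dl m) \<and>
              cuts T (S m) (Ob m) (A m) (pe m) (pt m) (tsoa m) (tsas m) (x m)) \<and>
          linking T M S Ob A D b tsoa}"
definition SUB where "SUB = {objective T M S A r tsas | tsoa tsas dl.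
          (\<forall>m\<in>{1..M}. inQ T (S m) (Ob m) (A m) (p0 m) (pe m) (pt m) (tsoa m) (tsas m) (dl m)) \<and>
          linking T M S Ob A D b tsoa}"

lemma obj_bound:
  assumes Qb: "\<forall>m\<in>{1..M}. Q_base T (S m) (Ob m) (A m) (p0 m) (pt m) (tsoa m) (tsas m) (dl m)"
  shows "objective T M S A r tsas \<le> (\<Sum>t\<in>{1..T}. \<Sum>m\<in>{1..M}. \<Sum>s\<in>S m. \<Sum>a\<in>A m. \<Sum>s'\<in>S m. \<bar>r m s a s'\<bar>)"
  unfolding objective_def
proof (intro sum_mono)
  fix t m s a s' assume t: "t \<in> {1..T}" and m: "m \<in> {1..M}" and s: "s \<in> S m" and a: "a \<in> A m" and s': "s' \<in> S m"
  have "0 \<le> tsas m t s a s'" using Qb t m s a s' unfolding Q_base_def by blast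
  moreover have "tsas m t s a s' \<le> 1" using compp.Qb_tsas_le1[OF CP[OF m]] Qb m t s a s' by blast
  ultimately have "\<bar>tsas m t s a s'\<bar> \<le> 1" by simp
  hence "\<bar>r m s a s' * tsas m t s a s'\<bar> \<le> \<bar>r m s a s'\<bar>" by (simp add: abs_mult mult_left_le)
  thus "r m s a s' * tsas m t s a s' \<le> \<bar>r m s a s'\<bar>" by simp
qed

lemma SR_bdd: "bdd_above SR"
  unfolding SR_def bdd_above_def using obj_bound unfolding inQd_relax_def by blast

lemma SRc_SR: "SRc \<subseteq> SR"
  unfolding SRc_def SR_def by blast

definition TOp where "TOp \<pi> = (\<lambda>m. TOR m (dpol \<pi> m))"
definition TSp where "TSp \<pi> = (\<lambda>m. TSR m (dpol \<pi> m))"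

lemma act_ex: "\<exists>act. (\<forall>m\<in>{1..M}. act m \<in> A m) \<and> (\<forall>k. (\<Sum>m\<in>{1..M}. D m (act m) k) \<le> b k)"
  using WC unfolding weakly_coupled_pomdp_def by blast

definition act where "act = (SOME act. (\<forall>m\<in>{1..M}. act m \<in> A m) \<and> (\<forall>k. (\<Sum>m\<in>{1..M}. D m (act m) k) \<le> b k))"
definition pia where "pia = (\<lambda>x\<in>Dom. act (fst x))"

lemma act: "\<forall>m\<in>{1..M}. act m \<in> A m" "\<forall>k. (\<Sum>m\<in>{1..M}. D m (act m) k) \<le> b k"
  using someI_ex[OF act_ex] unfolding act_def by blast+

lemma pia_Pol: "pia \<in> Pol"
  unfolding Pol_def pia_def using act(1) by (auto simp: Dom_def)

lemma tau_pia: assumes m: "m \<in> {1..M}" and t: "t \<in> {1..T}" and a: "a \<in> A m"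
  shows "tau_a S Ob (TOp pia) m t a = (if a = act m then 1 else 0)"
proof -
  interpret C: compp "S m" "Ob m" "A m" "p0 m" "pe m" "pt m" by (rule CP[OF m])
  have st: "C.stoch T (dpol pia m)" using stoch_dpol[OF pia_Pol m] .
  have dp: "dpol pia m t ob a = (if a = act m then 1 else 0)" if "ob \<in> Ob m" for ob
    using m t that by (auto simp: dpol_def pia_def Dom_def)
  have "tau_a S Ob (TOp pia) m t a = (\<Sum>s\<in>S m. \<Sum>ob\<in>Ob m. (if a = act m then 1 else 0) * pe m s ob * C.nuR (dpol pia m) t s)"
    unfolding tau_a_def TOp_def C.tsoaR_def using dp by (intro sum.cong refl) auto
  also have "\<dots> = (if a = act m then 1 else 0) * (\<Sum>s\<in>S m. C.nuR (dpol pia m) t s * (\<Sum>ob\<in>Ob m. pe m s ob))"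
    by (simp add: sum_distrib_left sum_distrib_right mult.commute mult.left_commute)
  also have "\<dots> = (if a = act m then 1 else 0) * (\<Sum>s\<in>S m. C.nuR (dpol pia m) t s)"
    using C.pe_sum by simp
  also have "\<dots> = (if a = act m then 1 else 0)" using C.nuR_mass[OF st t] by simp
  finally show ?thesis .
qed

lemma link_pia: "linking T M S Ob A D b (TOp pia)"
  unfolding linking_def
proof (intro ballI allI)
  fix t k assume t: "t \<in> {1..T}"
  have "usage M S Ob A D (TOp pia) t k = (\<Sum>m\<in>{1..M}. \<Sum>a\<in>A m. D m a k * (if a = act m then 1 else 0))"
    unfolding usage_def using tau_pia t by (intro sum.cong refl) auto
  also have "\<dots> = (\<Sum>m\<in>{1..M}. D m (act m) k)"
    using act(1) compp.fin[OF CP] by (intro sum.cong refl) (auto simp: if_distrib[of "\<lambda>x. _ * x"] sum.delta' cong: if_cong)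
  also have "\<dots> \<le> b k" using act(2) by blast
  finally show "usage M S Ob A D (TOp pia) t k \<le> b k" .
qed

lemma val_ge_obj: "\<pi> \<in> Pol \<Longrightarrow> \<beta> \<in> Bset \<Longrightarrow> linking T M S Ob A D b (TOp \<pi>) \<Longrightarrow> objective T M S A r (TSp \<pi>) \<le> val \<beta> \<pi>"
  unfolding val_def lagr_objective_def TOp_def[symmetric] TSp_def[symmetric]
  by (auto simp: Bset_def linking_def intro!: sum_nonneg mult_nonneg_nonneg)

lemma G_bdd_below: "bdd_below (G ` Bset)"
  unfolding bdd_below_def
proof (intro exI ballI)
  fix y assume "y \<in> G ` Bset"
  then obtain \<beta> where "\<beta> \<in> Bset" "y = G \<beta>" by auto
  thus "objective T M S A r (TSp pia) \<le> y"
    using val_ge_obj[OF pia_Pol _ link_pia] G_ge[OF pia_Pol] by (meson order_trans)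
qed

lemma zero_Bset: "(\<lambda>t k. 0) \<in> Bset" unfolding Bset_def by simp

lemma Bset_ne: "Bset \<noteq> {}" using zero_Bset by blast

lemma mix_SRc:
  assumes l0: "\<forall>p\<in>Pol. l p \<ge> 0" and l1: "(\<Sum>p\<in>Pol. l p) = 1"
    and lk: "\<forall>t\<in>{1..T}. \<forall>k. (\<Sum>p\<in>Pol. l p * (b k - usage M S Ob A D (TOp p) t k)) \<ge> 0"
  shows "(\<Sum>p\<in>Pol. l p * objective T M S A r (TSp p)) \<in> SRc"
proof -
  define tO where "tO = (\<lambda>m t s ob a. \<Sum>p\<in>Pol. l p * TOp p m t s ob a)"
  define tS where "tS = (\<lambda>m t s a s'. \<Sum>p\<in>Pol. l p * TSp p m t s a s')"
  define dL where "dL = (\<lambda>m t ob a. \<Sum>p\<in>Pol. l p * dpol p m t ob a)"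
  define xX where "xX = (\<lambda>m t s' a' s ob a. \<Sum>p\<in>Pol. l p * compp.xR (S m) (Ob m) (A m) (p0 m) (pe m) (pt m) (dpol p m) t s' a' s ob a)"
  have C: "inQd_relax T (S m) (Ob m) (A m) (p0 m) (pe m) (pt m) (tO m) (tS m) (dL m) \<and>
              cuts T (S m) (Ob m) (A m) (pe m) (pt m) (tO m) (tS m) (xX m)" if m: "m \<in> {1..M}" for m
  proof -
    interpret C: compp "S m" "Ob m" "A m" "p0 m" "pe m" "pt m" by (rule CP[OF m])
    have "\<forall>p\<in>Pol. inQd_relax T (S m) (Ob m) (A m) (p0 m) (pe m) (pt m) (TOp p m) (TSp p m) (dpol p m)
        \<and> cuts T (S m) (Ob m) (A m) (pe m) (pt m) (TOp p m) (TSp p m) (C.xR (dpol p m))"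
      using C.relax_R C.cuts_R stoch_dpol m unfolding TOp_def TSp_def by blast
    from C.mix_relax[OF fin_Pol l0 l1 this] show ?thesis
      unfolding tO_def tS_def dL_def xX_def by simp
  qed
  have L: "linking T M S Ob A D b tO"
    unfolding linking_def
  proof (intro ballI allI)
    fix t k assume t: "t \<in> {1..T}"
    have "usage M S Ob A D tO t k = (\<Sum>p\<in>Pol. l p * usage M S Ob A D (TOp p) t k)"
      unfolding tO_def by (rule usage_mix[OF fin_Pol])
    moreover have "(\<Sum>p\<in>Pol. l p * (b k - usage M S Ob A D (TOp p) t k)) = b k - (\<Sum>p\<in>Pol. l p * usage M S Ob A D (TOp p) t k)"
    proof -
      have "(\<Sum>p\<in>Pol. l p * b k) = b k" using l1 by (simp add: sum_distrib_right[symmetric])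
      thus ?thesis by (simp add: right_diff_distrib sum_subtractf)
    qed
    moreover have "(\<Sum>p\<in>Pol. l p * (b k - usage M S Ob A D (TOp p) t k)) \<ge> 0" using lk t by blast
    ultimately show "usage M S Ob A D tO t k \<le> b k" by linarith
  qed
  have O: "objective T M S A r tS = (\<Sum>p\<in>Pol. l p * objective T M S A r (TSp p))"
    unfolding tS_def by (rule obj_mix[OF fin_Pol])
  show ?thesis unfolding SRc_def
    by (rule CollectI, rule exI[of _ tO], rule exI[of _ tS], rule exI[of _ dL], rule exI[of _ xX]) (use C L O in auto)
qed

lemma sum_plus_split: "finite P \<Longrightarrow> finite Q \<Longrightarrow> (\<Sum>i\<in>Inl ` P \<union> Inr ` Q. f i) = (\<Sum>p\<in>P. f (Inl p)) + (\<Sum>j\<in>Q. f (Inr j))"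
  by (subst sum.union_disjoint) (auto simp: sum.reindex)

lemma sum_delta_neg: "finite J \<Longrightarrow> j0 \<in> J \<Longrightarrow> (\<Sum>j\<in>J. (if j = j0 then -1 else 0) * (x j::real)) = - x j0"
  by (simp add: if_distrib[of "\<lambda>u. u * _"] sum.delta' cong: if_cong)

lemma duality_eps:
  assumes e: "\<epsilon> > 0"
  shows "\<exists>\<beta>\<in>Bset. G \<beta> \<le> Sup SRc + \<epsilon>"
proof -
  define v where "v = Sup SRc"
  have bddc: "bdd_above SRc" using SR_bdd SRc_SR by (meson bdd_above_mono)
  define J where "J = {1..T} \<times> (UNIV :: 'k set)"
  have fJ: "finite J" unfolding J_def by simp
  define I where "I = Inl ` Pol \<union> Inr ` J"
  have fI: "finite I" unfolding I_def using fin_Pol fJ by simp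
  define gg where "gg p j = b (snd j) - usage M S Ob A D (TOp p) (fst j) (snd j)" for p j
  define ob where "ob p = objective T M S A r (TSp p)" for p
  define Ar where "Ar i j = (case i of Inl p \<Rightarrow> gg p j | Inr j' \<Rightarrow> if j = j' then -1 else (0::real))" for i j
  define Br where "Br i = (case i of Inl p \<Rightarrow> v + \<epsilon> - ob p | Inr (_::nat \<times> 'k) \<Rightarrow> (0::real))" for i
  show ?thesis
  proof (cases "\<exists>x. \<forall>i\<in>I. (\<Sum>j\<in>J. Ar i j * x j) \<le> Br i")
    case True
    then obtain x where x: "\<forall>i\<in>I. (\<Sum>j\<in>J. Ar i j * x j) \<le> Br i" by blast
    define \<beta> where "\<beta> t k = x (t,k)" for t k
    have B: "\<beta> \<in> Bset" unfolding Bset_def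
    proof (intro CollectI ballI allI)
      fix t k assume t: "t \<in> {1..T}"
      have "(t,k) \<in> J" using t unfolding J_def by simp
      hence "Inr (t,k) \<in> I" unfolding I_def by simp
      hence "(\<Sum>j\<in>J. (if j = (t,k) then -1 else 0) * x j) \<le> 0" using x by (auto simp: Ar_def Br_def)
      thus "0 \<le> \<beta> t k" using sum_delta_neg[OF fJ \<open>(t,k) \<in> J\<close>, of x] by (simp add: \<beta>_def)
    qed
    obtain p where p: "p \<in> Pol" "G \<beta> = val \<beta> p" using G_in by blast
    have "val \<beta> p = ob p + (\<Sum>j\<in>J. gg p j * x j)"
      unfolding val_def lagr_objective_def ob_def TSp_def J_def gg_def TOp_def
      by (simp add: sum.cartesian_product \<beta>_def mult.commute split_def)
    also have "(\<Sum>j\<in>J. gg p j * x j) \<le> v + \<epsilon> - ob p"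
    proof -
      have "Inl p \<in> I" using p unfolding I_def by simp
      from x[rule_format, OF this] show ?thesis by (simp add: Ar_def Br_def)
    qed
    finally show ?thesis using B p v_def by force
  next
    case False
    from farkas[OF fI fJ False] obtain y where
      y: "\<forall>i\<in>I. 0 \<le> y i" "\<forall>j\<in>J. (\<Sum>i\<in>I. y i * Ar i j) = 0" "(\<Sum>i\<in>I. y i * Br i) < 0" by blast
    define yp where "yp p = y (Inl p)" for p
    have yp0: "\<forall>p\<in>Pol. yp p \<ge> 0" using y(1) unfolding I_def yp_def by auto
    have a: "(\<Sum>p\<in>Pol. yp p * gg p j) \<ge> 0" if j: "j \<in> J" for j
    proof -
      have "(\<Sum>i\<in>I. y i * Ar i j) = (\<Sum>p\<in>Pol. yp p * gg p j) + (\<Sum>j'\<in>J. y (Inr j') * (if j = j' then -1 else 0))"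
        unfolding I_def by (subst sum_plus_split[OF fin_Pol fJ]) (simp add: Ar_def yp_def)
      also have "(\<Sum>j'\<in>J. y (Inr j') * (if j = j' then -1 else 0)) = - y (Inr j)"
        using sum_delta_neg[OF fJ j, of "\<lambda>j'. y (Inr j')"] by (simp add: mult.commute eq_commute)
      finally have "(\<Sum>p\<in>Pol. yp p * gg p j) = y (Inr j)" using y(2) j by simp
      moreover have "y (Inr j) \<ge> 0" using y(1) j unfolding I_def by auto
      ultimately show ?thesis by simp
    qed
    have bneg: "(\<Sum>p\<in>Pol. yp p * (v + \<epsilon> - ob p)) < 0"
    proof -
      have "(\<Sum>i\<in>I. y i * Br i) = (\<Sum>p\<in>Pol. yp p * (v + \<epsilon> - ob p))"
        unfolding I_def by (subst sum_plus_split[OF fin_Pol fJ]) (simp add: Br_def yp_def)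
      thus ?thesis using y(3) by simp
    qed
    define Y where "Y = (\<Sum>p\<in>Pol. yp p)"
    have Y0: "Y \<ge> 0" unfolding Y_def using yp0 by (simp add: sum_nonneg)
    have Ypos: "Y > 0"
    proof (rule ccontr)
      assume "\<not> Y > 0"
      hence "Y = 0" using Y0 by simp
      hence "\<forall>p\<in>Pol. yp p = 0" using yp0 fin_Pol unfolding Y_def by (simp add: sum_nonneg_eq_0_iff)
      hence "(\<Sum>p\<in>Pol. yp p * (v + \<epsilon> - ob p)) = 0" by simp
      thus False using bneg by simp
    qed
    define l where "l p = yp p / Y" for p
    have l0: "\<forall>p\<in>Pol. l p \<ge> 0" using yp0 Ypos by (simp add: l_def)
    have l1: "(\<Sum>p\<in>Pol. l p) = 1" using Ypos by (simp add: l_def Y_def sum_divide_distrib[symmetric])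
    have lk: "\<forall>t\<in>{1..T}. \<forall>k. (\<Sum>p\<in>Pol. l p * (b k - usage M S Ob A D (TOp p) t k)) \<ge> 0"
    proof (intro ballI allI)
      fix t k assume t: "t \<in> {1..T}"
      have "(t,k) \<in> J" using t unfolding J_def by simp
      from a[OF this] have "(\<Sum>p\<in>Pol. yp p * gg p (t,k)) / Y \<ge> 0" using Ypos by simp
      thus "(\<Sum>p\<in>Pol. l p * (b k - usage M S Ob A D (TOp p) t k)) \<ge> 0"
        by (simp add: l_def gg_def sum_divide_distrib)
    qed
    have inS: "(\<Sum>p\<in>Pol. l p * ob p) \<in> SRc" using mix_SRc[OF l0 l1 lk] unfolding ob_def .
    hence le: "(\<Sum>p\<in>Pol. l p * ob p) \<le> v" unfolding v_def using bddc by (rule cSup_upper)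
    have "(\<Sum>p\<in>Pol. yp p * (v + \<epsilon> - ob p)) = Y * (v + \<epsilon>) - Y * (\<Sum>p\<in>Pol. l p * ob p)"
    proof -
      have "Y * (\<Sum>p\<in>Pol. l p * ob p) = (\<Sum>p\<in>Pol. yp p * ob p)"
        unfolding sum_distrib_left l_def using Ypos by (intro sum.cong refl) simp
      moreover have "(\<Sum>p\<in>Pol. yp p * (v + \<epsilon>)) = Y * (v + \<epsilon>)" unfolding Y_def by (simp add: sum_distrib_right)
      ultimately show ?thesis by (simp add: right_diff_distrib sum_subtractf)
    qed
    hence "Y * (v + \<epsilon>) < Y * (\<Sum>p\<in>Pol. l p * ob p)" using bneg by simp
    hence "v + \<epsilon> < (\<Sum>p\<in>Pol. l p * ob p)" using Ypos by simp
    with le e have False by simp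
    thus ?thesis ..
  qed
qed


lemma zUB_eq: "z_LR_UB T M S Ob A p0 pe pt r D b = Inf (G ` Bset)"
  unfolding z_LR_UB_def Bset_def[symmetric] SQ_def[symmetric] Sup_SQ ..

lemma zIP_eq: "z_LR_IP T M S Ob A p0 pe pt r D b = Inf (G ` Bset)"
  unfolding z_LR_IP_def Bset_def[symmetric] SQd_def[symmetric] Sup_SQd ..

lemma pia_Q: "\<forall>m\<in>{1..M}. inQ T (S m) (Ob m) (A m) (p0 m) (pe m) (pt m) (TOp pia m) (TSp pia m) (dpol pia m)"
  using compp.inQ_R[OF CP] stoch_dpol[OF pia_Pol] unfolding TOp_def TSp_def by blast

lemma pia_R: "\<forall>m\<in>{1..M}. inQd_relax T (S m) (Ob m) (A m) (p0 m) (pe m) (pt m) (TOp pia m) (TSp pia m) (dpol pia m) \<and>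
   cuts T (S m) (Ob m) (A m) (pe m) (pt m) (TOp pia m) (TSp pia m) (compp.xR (S m) (Ob m) (A m) (p0 m) (pe m) (pt m) (dpol pia m))"
  using compp.relax_R[OF CP] compp.cuts_R[OF CP] stoch_dpol[OF pia_Pol] unfolding TOp_def TSp_def by blast

lemma part2: "z_UB T M S Ob A p0 pe pt r D b \<le> Inf (G ` Bset)"
proof -
  have zub: "z_UB T M S Ob A p0 pe pt r D b = Sup SUB" unfolding z_UB_def SUB_def ..
  have ne: "SUB \<noteq> {}" unfolding SUB_def using pia_Q link_pia by blast
  have "Sup SUB \<le> G \<beta>" if B: "\<beta> \<in> Bset" for \<beta>
  proof (rule cSup_least[OF ne])
    fix x assume "x \<in> SUB"
    then obtain tsoa tsas dl where x: "x = objective T M S A r tsas"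
      and Q: "\<forall>m\<in>{1..M}. inQ T (S m) (Ob m) (A m) (p0 m) (pe m) (pt m) (tsoa m) (tsas m) (dl m)"
      and L: "linking T M S Ob A D b tsoa" unfolding SUB_def by blast
    have "x \<le> lagr_objective T M S Ob A r D b \<beta> tsoa tsas"
      unfolding x lagr_objective_def using B L
      by (auto simp: Bset_def linking_def intro!: sum_nonneg mult_nonneg_nonneg)
    also have "\<dots> \<le> G \<beta>" by (rule upper[OF Q])
    finally show "x \<le> G \<beta>" .
  qed
  hence "Sup SUB \<le> Inf (G ` Bset)" using Bset_ne by (intro cInf_greatest) auto
  thus ?thesis using zub by simp
qed

lemma part3: "Inf (G ` Bset) \<le> z_Rc T M S Ob A p0 pe pt r D b"
proof -
  have zrc: "z_Rc T M S Ob A p0 pe pt r D b = Sup SRc" unfolding z_Rc_def SRc_def ..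
  have "Inf (G ` Bset) \<le> Sup SRc + e" if e: "e > 0" for e
  proof -
    obtain \<beta> where "\<beta> \<in> Bset" "G \<beta> \<le> Sup SRc + e" using duality_eps[OF e] by blast
    moreover have "Inf (G ` Bset) \<le> G \<beta>" using G_bdd_below \<open>\<beta> \<in> Bset\<close> by (intro cInf_lower) auto
    ultimately show ?thesis by simp
  qed
  hence "Inf (G ` Bset) \<le> Sup SRc" by (rule field_le_epsilon)
  thus ?thesis using zrc by simp
qed

lemma part4: "z_Rc T M S Ob A p0 pe pt r D b \<le> z_R T M S Ob A p0 pe pt r D b"
proof -
  have zrc: "z_Rc T M S Ob A p0 pe pt r D b = Sup SRc" unfolding z_Rc_def SRc_def ..
  have zr: "z_R T M S Ob A p0 pe pt r D b = Sup SR" unfolding z_R_def SR_def ..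
  have "objective T M S A r (TSp pia) \<in> SRc" unfolding SRc_def
    by (rule CollectI, rule exI[of _ "TOp pia"], rule exI[of _ "TSp pia"], rule exI[of _ "dpol pia"],
        rule exI[of _ "\<lambda>m. compp.xR (S m) (Ob m) (A m) (p0 m) (pe m) (pt m) (dpol pia m)"]) (use pia_R link_pia in simp)
  hence ne: "SRc \<noteq> {}" by blast
  show ?thesis unfolding zrc zr by (rule cSup_subset_mono[OF ne SR_bdd SRc_SR])
qed

theorem main: "z_LR_IP T M S Ob A p0 pe pt r D b = z_LR_UB T M S Ob A p0 pe pt r D b \<and>
         z_UB T M S Ob A p0 pe pt r D b \<le> z_LR_UB T M S Ob A p0 pe pt r D b \<and>
         z_LR_UB T M S Ob A p0 pe pt r D b \<le> z_Rc T M S Ob A p0 pe pt r D b \<and>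
         z_Rc T M S Ob A p0 pe pt r D b \<le> z_R T M S Ob A p0 pe pt r D b"
  using zUB_eq zIP_eq part2 part3 part4 by simp

end

theorem mainTheorem7:
  fixes T M :: nat
    and S :: "nat \<Rightarrow> 's set" and Ob :: "nat \<Rightarrow> 'ob set" and A :: "nat \<Rightarrow> 'a set"
    and p0 :: "nat \<Rightarrow> 's \<Rightarrow> real" and pe :: "nat \<Rightarrow> 's \<Rightarrow> 'ob \<Rightarrow> real"
    and pt :: "nat \<Rightarrow> 's \<Rightarrow> 'a \<Rightarrow> 's \<Rightarrow> real" and r :: "nat \<Rightarrow> 's \<Rightarrow> 'a \<Rightarrow> 's \<Rightarrow> real"
    and D :: "nat \<Rightarrow> 'a \<Rightarrow> 'k::finite \<Rightarrow> real" and b :: "'k \<Rightarrow> real"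
  assumes "weakly_coupled_pomdp M S Ob A p0 pe pt D b"
  shows "z_LR_IP T M S Ob A p0 pe pt r D b = z_LR_UB T M S Ob A p0 pe pt r D b \<and>
         z_UB T M S Ob A p0 pe pt r D b \<le> z_LR_UB T M S Ob A p0 pe pt r D b \<and>
         z_LR_UB T M S Ob A p0 pe pt r D b \<le> z_Rc T M S Ob A p0 pe pt r D b \<and>
         z_Rc T M S Ob A p0 pe pt r D b \<le> z_R T M S Ob A p0 pe pt r D b"
proof -
  interpret glob T M S Ob A p0 pe pt r D b by (rule glob.intro[OF assms])
  show ?thesis by (rule main)
qed

end
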